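(* Let $\mathbf{B}\in\mathbb{R}_+^{n\times n}$ with columns $\mathbf{b}_i$, $\omega\ge0$, $\boldsymbol{\lambda}_0$ a constant nonnegative vector, and $\mathbf{Q},\mathbf{S},\mathbf{F}$ symmetric matrices with nonnegative entries, $\mathbf{S}$ invertible. Consider the equation for $J(\boldsymbol{\lambda},t)$ $$0=J_t(\boldsymbol{\lambda},t)+[\omega\boldsymbol{\lambda}_0-\omega\boldsymbol{\lambda}]^T\nabla_{\boldsymbol{\lambda}}J(\boldsymbol{\lambda},t)+\boldsymbol{\lambda}^T\Delta_BJ-\tfrac12\boldsymbol{\lambda}^T\mathbf{Q}\boldsymbol{\lambda}-\tfrac12(\Delta_BJ)^T\mathbf{S}^{-1}\Delta_BJ,$$ with terminal condition $J(\boldsymbol{\lambda},t_f)=-\tfrac12\boldsymbol{\lambda}^T\mathbf{F}\boldsymbol{\lambda}$, where $(\Delta_BJ)_i=J(\boldsymbol{\lambda}+\mathbf{b}_i,t)-J(\boldsymbol{\lambda},t)$. Among polynomials in $\boldsymbol{\lambda}$ of finite degree (with time-varying coefficients), the only solution is the quadratic form $$J(\boldsymbol{\lambda},t)=f(t)+\mathbf{g}(t)^T\boldsymbol{\lambda}+\tfrac12\boldsymbol{\lambda}^T\mathbf{H}(t)\boldsymbol{\lambda},$$ where $\mathbf{H}(t)$ and $\mathbf{g}(t)$ solve, backward in time with $\mathbf{H}(t_f)=-\mathbf{F}$ and $\mathbf{g}(t_f)=\mathbf{0}$, $$\dot{\mathbf{H}}(t)=(\omega\mathbf{I}-\mathbf{B})^T\mathbf{H}(t)+\mathbf{H}(t)(\omega\mathbf{I}-\mathbf{B})+\mathbf{H}(t)\mathbf{B}\mathbf{S}^{-1}\mathbf{B}^T\mathbf{H}(t)+\mathbf{Q},$$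 $$\dot{\mathbf{g}}(t)=[\omega\mathbf{I}-\mathbf{B}^T+\mathbf{H}(t)\mathbf{B}\mathbf{S}^{-1}\mathbf{B}^T]\mathbf{g}(t)-\omega\mathbf{H}(t)\boldsymbol{\lambda}_0+\tfrac12[\mathbf{H}(t)\mathbf{B}\mathbf{S}^{-1}-\mathbf{I}]\,\mathrm{diag}(\mathbf{B}^T\mathbf{H}(t)\mathbf{B}).$$
   Context: $\mathrm{diag}(\mathbf{X})$ denotes the vector of diagonal entries of a square matrix $\mathbf{X}$. The equation is the Hamilton–Jacobi–Bellman equation of the activity maximization problem: the intensity $\boldsymbol{\lambda}$ of $n$ users' organic actions follows $d\boldsymbol{\lambda}=[\omega\boldsymbol{\lambda}_0-\omega\boldsymbol{\lambda}]dt+\mathbf{B}d\mathbf{N}+\mathbf{B}d\mathbf{P}$, where $\mathbf{P}$ counts directly incentivized actions with control intensity $\mathbf{u}(t)\ge0$, and one minimizes $\mathbb{E}[-\tfrac12\boldsymbol{\lambda}^T(t_f)\mathbf{F}\boldsymbol{\lambda}(t_f)+\int_{t_0}^{t_f}(-\tfrac12\boldsymbol{\lambda}^T\mathbf{Q}\boldsymbol{\lambda}+\tfrac12\mathbf{u}^T\mathbf{S}\mathbf{u})dt]$. *)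

theory Defs
  imports "HOL-Analysis.Analysis"
begin

definition diag_vec :: "real^'n^'n \<Rightarrow> real^'n" where
  "diag_vec X = (\<chi> i. X $ i $ i)"

definition col :: "real^'n^'n \<Rightarrow> 'n \<Rightarrow> real^'n" where
  "col B i = (\<chi> j. B $ j $ i)"

definition DeltaB :: "real^'n^'n \<Rightarrow> (real^'n \<Rightarrow> real \<Rightarrow> real) \<Rightarrow> real^'n \<Rightarrow> real \<Rightarrow> real^'n" where
  "DeltaB B J l t = (\<chi> i. J (l + col B i) t - J l t)"

definition poly_in_lambda :: "(real^'n \<Rightarrow> real \<Rightarrow> real) \<Rightarrow> real set \<Rightarrow> bool" where
  "poly_in_lambda J T \<longleftrightarrow>
     (\<exists>(d::nat) (c :: ('n \<Rightarrow> nat) \<Rightarrow> real \<Rightarrow> real).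
        \<forall>l. \<forall>t\<in>T. J l t =
          (\<Sum>\<alpha>\<in>{\<alpha>::'n \<Rightarrow> nat. (\<Sum>i\<in>UNIV. \<alpha> i) \<le> d}.
              c \<alpha> t * (\<Prod>i\<in>UNIV. (l $ i) ^ (\<alpha> i))))"

end

theory Submission
  imports Defs
begin


definition mon :: "('n::finite \<Rightarrow> nat) \<Rightarrow> real^'n \<Rightarrow> real" where
  "mon \<alpha> l = (\<Prod>i\<in>UNIV. (l$i)^(\<alpha> i))"
definition deg :: "('n::finite \<Rightarrow> nat) \<Rightarrow> nat" where "deg \<alpha> = (\<Sum>i\<in>UNIV. \<alpha> i)"
definition Ad :: "nat \<Rightarrow> ('n::finite \<Rightarrow> nat) set" where "Ad k = {\<alpha>. deg \<alpha> \<le> k}"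
definition polyk :: "nat \<Rightarrow> (real^'n::finite \<Rightarrow> real) \<Rightarrow> bool" where
  "polyk k p \<longleftrightarrow> (\<exists>c. \<forall>l. p l = (\<Sum>\<alpha>\<in>Ad k. c \<alpha> * mon \<alpha> l))"

lemma finite_Ad: "finite (Ad k :: ('n::finite \<Rightarrow> nat) set)"
proof -
  have "Ad k \<subseteq> PiE (UNIV::'n set) (\<lambda>i. {..k})"
    by (auto simp: Ad_def deg_def PiE_def extensional_def Pi_def
        intro: order.trans[OF member_le_sum[of _ UNIV]])
  moreover have "finite (PiE (UNIV::'n set) (\<lambda>i. {..k}))" by (intro finite_PiE) auto
  ultimately show ?thesis using finite_subset by blast
qed

lemma deg_zero[simp]: "deg (\<lambda>i. 0) = 0" by (simp add: deg_def)
lemma mon_zero[simp]: "mon (\<lambda>i. 0) l = 1" by (simp add: mon_def)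

lemma mon_add: "mon (\<lambda>i. \<alpha> i + \<beta> i) l = mon \<alpha> l * mon \<beta> l"
  by (simp add: mon_def power_add prod.distrib)
lemma deg_add: "deg (\<lambda>i. \<alpha> i + \<beta> i) = deg \<alpha> + deg \<beta>"
  by (simp add: deg_def sum.distrib)

lemma polyk_ext: "polyk k p \<longleftrightarrow> (\<exists>c. \<forall>l. p l = (\<Sum>\<alpha>\<in>Ad k. c \<alpha> * mon \<alpha> l))"
  by (simp add: polyk_def)

lemma sum_ind: fixes c :: real shows "finite A \<Longrightarrow> (\<Sum>\<beta>\<in>A. (if \<beta> = \<alpha> then c else 0) * f \<beta>) = (if \<alpha> \<in> A then c * f \<alpha> else 0)"
proof -
  assume "finite A"
  have "(\<Sum>\<beta>\<in>A. (if \<beta> = \<alpha> then c else 0) * f \<beta>) = (\<Sum>\<beta>\<in>A. if \<beta> = \<alpha> then c * f \<beta> else 0)"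
    by (intro sum.cong) auto
  also have "\<dots> = (if \<alpha> \<in> A then c * f \<alpha> else 0)" using \<open>finite A\<close> by (simp add: sum.delta')
  finally show ?thesis .
qed

lemma polyk_mon_deg: "deg \<alpha> \<le> k \<Longrightarrow> polyk k (mon \<alpha>)"
  unfolding polyk_def
  by (rule exI[of _ "\<lambda>\<beta>. if \<beta> = \<alpha> then 1 else 0"])
     (subst sum_ind[OF finite_Ad], simp add: Ad_def)

lemma polyk_const: "polyk k (\<lambda>l. a)"
  unfolding polyk_def
  by (rule exI[of _ "\<lambda>\<beta>. if \<beta> = (\<lambda>i. 0) then a else 0"])
     (subst sum_ind[OF finite_Ad], simp add: Ad_def)

lemma polyk_le: assumes "polyk k p" "k \<le> k'" shows "polyk k' p"
proof -
  obtain c where c: "\<forall>l. p l = (\<Sum>\<alpha>\<in>Ad k. c \<alpha> * mon \<alpha> l)" using assms by (auto simp: polyk_def)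
  have sub: "Ad k \<subseteq> Ad k'" using assms(2) by (auto simp: Ad_def)
  show ?thesis unfolding polyk_def
  proof (intro exI allI)
    fix l
    have "(\<Sum>\<alpha>\<in>Ad k'. (if \<alpha> \<in> Ad k then c \<alpha> else 0) * mon \<alpha> l)
       = (\<Sum>\<alpha>\<in>Ad k'. if \<alpha> \<in> Ad k then c \<alpha> * mon \<alpha> l else 0)"
      by (intro sum.cong) auto
    also have "\<dots> = (\<Sum>\<alpha>\<in>Ad k. c \<alpha> * mon \<alpha> l)"
    proof -
      have eq: "Ad k' \<inter> Ad k = Ad k" using sub by blast
      show ?thesis using sum.inter_restrict[OF finite_Ad, of "\<lambda>\<alpha>. c \<alpha> * mon \<alpha> l" k' "Ad k"] unfolding eq by simp
    qed
    finally have "(\<Sum>\<alpha>\<in>Ad k'. (if \<alpha> \<in> Ad k then c \<alpha> else 0) * mon \<alpha> l) = (\<Sum>\<alpha>\<in>Ad k. c \<alpha> * mon \<alpha> l)" .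
    then show "p l = (\<Sum>\<alpha>\<in>Ad k'. (if \<alpha> \<in> Ad k then c \<alpha> else 0) * mon \<alpha> l)" using c by simp
  qed
qed

lemma polyk_add: assumes "polyk k p" "polyk k q" shows "polyk k (\<lambda>l. p l + q l)"
proof -
  obtain c where c: "\<forall>l. p l = (\<Sum>\<alpha>\<in>Ad k. c \<alpha> * mon \<alpha> l)" using assms by (auto simp: polyk_def)
  obtain d where d: "\<forall>l. q l = (\<Sum>\<alpha>\<in>Ad k. d \<alpha> * mon \<alpha> l)" using assms by (auto simp: polyk_def)
  show ?thesis unfolding polyk_def
    by (rule exI[of _ "\<lambda>\<alpha>. c \<alpha> + d \<alpha>"]) (simp add: c d algebra_simps sum.distrib)
qed

lemma polyk_cmult: assumes "polyk k p" shows "polyk k (\<lambda>l. a * p l)"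
proof -
  obtain c where c: "\<forall>l. p l = (\<Sum>\<alpha>\<in>Ad k. c \<alpha> * mon \<alpha> l)" using assms by (auto simp: polyk_def)
  show ?thesis unfolding polyk_def
    by (rule exI[of _ "\<lambda>\<alpha>. a * c \<alpha>"]) (simp add: c sum_distrib_left mult.assoc)
qed

lemma polyk_zero: "polyk k (\<lambda>l. 0)" using polyk_const[of k 0] .

lemma polyk_neg: "polyk k p \<Longrightarrow> polyk k (\<lambda>l. - p l)"
  using polyk_cmult[of k p "-1"] by simp

lemma polyk_diff: "polyk k p \<Longrightarrow> polyk k q \<Longrightarrow> polyk k (\<lambda>l. p l - q l)"
  using polyk_add[of k p "\<lambda>l. - q l"] polyk_neg[of k q] by simp

lemma polyk_sum: "finite A \<Longrightarrow> (\<And>a. a \<in> A \<Longrightarrow> polyk k (p a)) \<Longrightarrow> polyk k (\<lambda>l. \<Sum>a\<in>A. p a l)"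
  by (induction A rule: finite_induct) (auto intro: polyk_zero polyk_add)

lemma polyk_mult: assumes "polyk a p" "polyk b q" shows "polyk (a+b) (\<lambda>l. p l * q l)"
proof -
  obtain c where c: "\<forall>l. p l = (\<Sum>\<alpha>\<in>Ad a. c \<alpha> * mon \<alpha> l)" using assms by (auto simp: polyk_def)
  obtain d where d: "\<forall>l. q l = (\<Sum>\<alpha>\<in>Ad b. d \<alpha> * mon \<alpha> l)" using assms by (auto simp: polyk_def)
  have eq: "p l * q l = (\<Sum>\<alpha>\<in>Ad a. \<Sum>\<beta>\<in>Ad b. (c \<alpha> * d \<beta>) * mon (\<lambda>i. \<alpha> i + \<beta> i) l)" for l
    by (simp add: c d sum_product mon_add mult_ac)
  show ?thesis unfolding eq
    by (intro polyk_sum finite_Ad polyk_cmult polyk_mon_deg) (auto simp: Ad_def deg_add)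
qed

lemma polyk_prod: "finite I \<Longrightarrow> (\<And>i. i \<in> I \<Longrightarrow> polyk (k i) (p i)) \<Longrightarrow>
   polyk (\<Sum>i\<in>I. k i) (\<lambda>l. \<Prod>i\<in>I. p i l)"
  by (induction I rule: finite_induct) (auto intro: polyk_const polyk_mult)

lemma polyk_power: "polyk k p \<Longrightarrow> polyk (m * k) (\<lambda>l. p l ^ m)"
  using polyk_prod[of "{..<m}" "\<lambda>_. k" "\<lambda>_. p"] by (simp add: mult.commute)

lemma polyk_coord: "polyk 1 (\<lambda>l. l $ i)"
proof -
  have A: "mon (\<lambda>j. if j = i then 1 else 0) l = l $ i" for l
  proof -
    have "mon (\<lambda>j. if j = i then 1 else 0) l = (\<Prod>j\<in>UNIV. if j = i then l $ j else 1)"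
      unfolding mon_def by (intro prod.cong) auto
    then show ?thesis by (simp add: prod.delta')
  qed
  moreover have "deg (\<lambda>j. if j = i then 1 else 0 :: nat) = 1" by (simp add: deg_def)
  moreover have "mon (\<lambda>j. if j = i then 1 else 0) = (\<lambda>l. l $ i)" using A by auto
  ultimately show ?thesis using polyk_mon_deg[of "\<lambda>j. if j = i then 1 else 0" 1] by simp
qed

lemma polyk_shift: assumes "polyk k p" shows "polyk k (\<lambda>l. p (l + b))"
proof -
  obtain c where c: "\<forall>l. p l = (\<Sum>\<alpha>\<in>Ad k. c \<alpha> * mon \<alpha> l)" using assms by (auto simp: polyk_def)
  have m: "polyk k (\<lambda>l. mon \<alpha> (l + b))" if "\<alpha> \<in> Ad k" for \<alpha>
  proof -
    have "polyk (\<Sum>i\<in>UNIV. \<alpha> i * 1) (\<lambda>l. \<Prod>i\<in>UNIV. (l $ i + b $ i) ^ \<alpha> i)"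
      by (intro polyk_prod polyk_power polyk_add polyk_coord polyk_const) auto
    then show ?thesis using that by (auto simp: mon_def Ad_def deg_def intro: polyk_le)
  qed
  have "(\<lambda>l. p (l+b)) = (\<lambda>l. \<Sum>\<alpha>\<in>Ad k. c \<alpha> * mon \<alpha> (l+b))" using c by auto
  then show ?thesis by (simp only:) (intro polyk_sum finite_Ad polyk_cmult m)
qed




definition G :: "nat \<Rightarrow> nat \<Rightarrow> real" where
  "G a b = (\<Sum>g\<le>a. (-1)^g * real (a choose g) * real g ^ b)"

lemma G_Suc: "G (Suc a) b = - (\<Sum>k<b. real (b choose k) * G a k)"
proof -
  have s1: "G (Suc a) b = 0^b + (\<Sum>h\<le>a. (-1)^(Suc h) * real (Suc a choose Suc h) * real (Suc h)^b)"
    unfolding G_def by (subst sum.atMost_Suc_shift) simp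
  have s2: "(\<Sum>h\<le>a. (-1)^(Suc h) * real (Suc a choose Suc h) * real (Suc h)^b)
     = - (\<Sum>h\<le>a. (-1)^h * real (a choose h) * real (Suc h)^b)
       + (\<Sum>h\<le>a. (-1)^(Suc h) * real (a choose Suc h) * real (Suc h)^b)"
    by (simp add: sum.distrib[symmetric] sum_negf[symmetric] algebra_simps)
  have s3: "(\<Sum>h\<le>a. (-1)^(Suc h) * real (a choose Suc h) * real (Suc h)^b) = G a b - 0^b"
  proof -
    have "G a b = (\<Sum>g\<le>Suc a. (-1)^g * real (a choose g) * real g ^ b)"
      unfolding G_def by (simp add: binomial_eq_0)
    also have "\<dots> = 0^b + (\<Sum>h\<le>a. (-1)^(Suc h) * real (a choose Suc h) * real (Suc h)^b)"
      by (subst sum.atMost_Suc_shift) simp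
    finally show ?thesis by simp
  qed
  have bin: "real (Suc h)^b = real h ^ b + (\<Sum>k<b. real (b choose k) * real h ^ k)" for h
  proof -
    have "real (Suc h)^b = (real h + 1)^b" by (simp add: add.commute)
    also have "\<dots> = (\<Sum>k\<le>b. real (b choose k) * real h ^ k * 1^(b-k))"
      by (rule binomial_ring)
    also have "\<dots> = (\<Sum>k<Suc b. real (b choose k) * real h ^ k)"
      by (simp add: lessThan_Suc_atMost)
    also have "\<dots> = real h ^ b + (\<Sum>k<b. real (b choose k) * real h ^ k)"
      by simp
    finally show ?thesis .
  qed
  have s4: "(\<Sum>h\<le>a. (-1)^h * real (a choose h) * real (Suc h)^b)
      = G a b + (\<Sum>k<b. real (b choose k) * G a k)"
  proof -
    have "(\<Sum>h\<le>a. (-1)^h * real (a choose h) * real (Suc h)^b)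
       = (\<Sum>h\<le>a. (-1)^h * real (a choose h) * real h ^ b)
         + (\<Sum>h\<le>a. \<Sum>k<b. real (b choose k) * ((-1)^h * real (a choose h) * real h ^ k))"
      by (simp only: bin) (simp add: algebra_simps sum.distrib sum_distrib_left)
    also have "(\<Sum>h\<le>a. \<Sum>k<b. real (b choose k) * ((-1)^h * real (a choose h) * real h ^ k))
       = (\<Sum>k<b. real (b choose k) * G a k)"
      unfolding G_def by (subst sum.swap) (simp add: sum_distrib_left)
    finally show ?thesis by (simp add: G_def)
  qed
  show ?thesis using s1 s2 s3 s4 by simp
qed

lemma G_vals: "(\<forall>b<a. G a b = 0) \<and> G a a = (-1)^a * fact a"
proof (induction a)
  case 0
  then show ?case by (simp add: G_def)
next
  case (Suc a)
  have z: "G (Suc a) b = 0" if "b < Suc a" for b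
  proof -
    have "(\<Sum>k<b. real (b choose k) * G a k) = 0"
      using Suc.IH that by (intro sum.neutral) auto
    then show ?thesis by (simp add: G_Suc)
  qed
  have "(\<Sum>k<Suc a. real (Suc a choose k) * G a k) = real (Suc a choose a) * G a a"
  proof -
    have "(\<Sum>k<a. real (Suc a choose k) * G a k) = 0"
      using Suc.IH by (intro sum.neutral) auto
    then show ?thesis by simp
  qed
  then have "G (Suc a) (Suc a) = - (real (Suc a) * ((-1)^a * fact a))"
    using Suc.IH by (simp add: G_Suc binomial_Suc_n)
  then have "G (Suc a) (Suc a) = (-1)^(Suc a) * fact (Suc a)"
    by (simp add: algebra_simps)
  with z show ?case by blast
qed

definition bx :: "('n::finite \<Rightarrow> nat) \<Rightarrow> ('n \<Rightarrow> nat) set" where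
  "bx \<alpha> = PiE UNIV (\<lambda>i. {..\<alpha> i})"
definition pt :: "('n::finite \<Rightarrow> nat) \<Rightarrow> real^'n" where "pt \<gamma> = (\<chi> i. real (\<gamma> i))"
definition EE :: "('n::finite \<Rightarrow> nat) \<Rightarrow> (real^'n \<Rightarrow> real) \<Rightarrow> real" where
  "EE \<alpha> f = (\<Sum>\<gamma>\<in>bx \<alpha>. (\<Prod>i\<in>UNIV. (-1)^(\<gamma> i) * real (\<alpha> i choose \<gamma> i)) * f (pt \<gamma>))"

lemma finite_bx: "finite (bx \<alpha>)"
  unfolding bx_def by (intro finite_PiE) auto

lemma EE_mon: "EE \<alpha> (mon \<beta>) = (\<Prod>i\<in>UNIV. G (\<alpha> i) (\<beta> i))"
proof -
  have "EE \<alpha> (mon \<beta>) = (\<Sum>\<gamma>\<in>bx \<alpha>. \<Prod>i\<in>UNIV. (-1)^(\<gamma> i) * real (\<alpha> i choose \<gamma> i) * real (\<gamma> i) ^ (\<beta> i))"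
    unfolding EE_def mon_def pt_def by (simp add: prod.distrib)
  also have "\<dots> = (\<Prod>i\<in>UNIV. \<Sum>g\<le>\<alpha> i. (-1)^g * real (\<alpha> i choose g) * real g ^ (\<beta> i))"
    unfolding bx_def by (subst prod_sum_PiE) auto
  finally show ?thesis by (simp add: G_def)
qed

lemma EE_lin: "EE \<alpha> (\<lambda>l. \<Sum>\<beta>\<in>A. c \<beta> * f \<beta> l) = (\<Sum>\<beta>\<in>A. c \<beta> * EE \<alpha> (f \<beta>))"
proof -
  define w where "w \<gamma> = (\<Prod>i\<in>UNIV. (-1)^(\<gamma> i) * real (\<alpha> i choose \<gamma> i))" for \<gamma>
  have "EE \<alpha> (\<lambda>l. \<Sum>\<beta>\<in>A. c \<beta> * f \<beta> l) = (\<Sum>\<gamma>\<in>bx \<alpha>. \<Sum>\<beta>\<in>A. c \<beta> * (w \<gamma> * f \<beta> (pt \<gamma>)))"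
    unfolding EE_def w_def by (simp add: sum_distrib_left sum_distrib_right mult_ac)
  also have "\<dots> = (\<Sum>\<beta>\<in>A. \<Sum>\<gamma>\<in>bx \<alpha>. c \<beta> * (w \<gamma> * f \<beta> (pt \<gamma>)))" by (rule sum.swap)
  also have "\<dots> = (\<Sum>\<beta>\<in>A. c \<beta> * EE \<alpha> (f \<beta>))"
    unfolding EE_def w_def by (simp add: sum_distrib_left)
  finally show ?thesis .
qed

lemma EE_mon_zero: "\<not> (\<forall>i. \<alpha> i \<le> \<beta> i) \<Longrightarrow> EE \<alpha> (mon \<beta>) = 0"
  using G_vals by (auto simp: EE_mon not_le)

lemma EE_mon_self: "EE \<alpha> (mon \<alpha>) \<noteq> 0"
  using G_vals by (simp add: EE_mon)

lemma le_deg: "(\<forall>i. \<alpha> i \<le> \<beta> i) \<Longrightarrow> \<alpha> \<noteq> \<beta> \<Longrightarrow> deg \<alpha> < deg \<beta>"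
  unfolding deg_def by (intro sum_strict_mono_ex1) (auto simp: fun_eq_iff intro: le_neq_trans)

lemma uniq0:
  assumes A: "finite A" and z: "\<forall>l. (\<Sum>\<beta>\<in>A. c \<beta> * mon \<beta> l) = 0"
  shows "\<forall>\<beta>\<in>A. c \<beta> = 0"
proof (rule ccontr)
  assume nt: "\<not> (\<forall>\<beta>\<in>A. c \<beta> = 0)"
  define Z where "Z = {\<beta>\<in>A. c \<beta> \<noteq> 0}"
  have Zne: "Z \<noteq> {}" and Zf: "finite Z" using nt A by (auto simp: Z_def)
  define m where "m = Max (deg ` Z)"
  have "m \<in> deg ` Z" using Max_in[of "deg ` Z"] Zne Zf by (simp add: m_def)
  then obtain \<alpha> where \<alpha>: "\<alpha> \<in> Z" "deg \<alpha> = m" by blast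
  have mx: "deg \<beta> \<le> deg \<alpha>" if "\<beta> \<in> Z" for \<beta> using that Zf \<alpha> by (auto simp: m_def)
  have "(\<lambda>l. \<Sum>\<beta>\<in>A. c \<beta> * mon \<beta> l) = (\<lambda>l. 0)" using z by auto
  then have "0 = EE \<alpha> (\<lambda>l. \<Sum>\<beta>\<in>A. c \<beta> * mon \<beta> l)" by (simp add: EE_def)
  also have "\<dots> = (\<Sum>\<beta>\<in>A. c \<beta> * EE \<alpha> (mon \<beta>))" by (rule EE_lin)
  also have "\<dots> = c \<alpha> * EE \<alpha> (mon \<alpha>) + (\<Sum>\<beta>\<in>A - {\<alpha>}. c \<beta> * EE \<alpha> (mon \<beta>))"
  proof -
    have "\<alpha> \<in> A" using \<alpha> by (simp add: Z_def)
    then show ?thesis using sum.remove[OF A, of \<alpha> "\<lambda>\<beta>. c \<beta> * EE \<alpha> (mon \<beta>)"] by simp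
  qed
  also have "(\<Sum>\<beta>\<in>A - {\<alpha>}. c \<beta> * EE \<alpha> (mon \<beta>)) = 0"
  proof (intro sum.neutral ballI)
    fix \<beta> assume b: "\<beta> \<in> A - {\<alpha>}"
    show "c \<beta> * EE \<alpha> (mon \<beta>) = 0"
    proof (cases "c \<beta> = 0")
      case False
      then have "\<beta> \<in> Z" using b by (auto simp: Z_def)
      then have "\<not> (\<forall>i. \<alpha> i \<le> \<beta> i)" using mx le_deg[of \<alpha> \<beta>] b by force
      then show ?thesis by (simp add: EE_mon_zero)
    qed simp
  qed
  finally have "c \<alpha> * EE \<alpha> (mon \<alpha>) = 0" by simp
  then show False using EE_mon_self \<alpha> by (auto simp: Z_def)
qed

lemma uniq:
  assumes A: "finite A" and z: "\<forall>l. (\<Sum>\<beta>\<in>A. c \<beta> * mon \<beta> l) = (\<Sum>\<beta>\<in>A. d \<beta> * mon \<beta> l)"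
  shows "\<forall>\<beta>\<in>A. c \<beta> = d \<beta>"
proof -
  have "\<forall>l. (\<Sum>\<beta>\<in>A. (c \<beta> - d \<beta>) * mon \<beta> l) = 0"
    using z by (simp add: left_diff_distrib sum_subtractf)
  from uniq0[OF A this] show ?thesis by simp
qed

lemma ex_deriv_sum:
  "finite A \<Longrightarrow> (\<forall>a\<in>A. \<exists>D. (f a has_real_derivative D) (at t within T)) \<Longrightarrow>
   \<exists>D. ((\<lambda>s. \<Sum>a\<in>A. f a s) has_real_derivative D) (at t within T)"
proof (induction A rule: finite_induct)
  case empty then show ?case by (auto intro: DERIV_const)
next
  case (insert x A)
  then obtain D1 D2 where "(f x has_real_derivative D1) (at t within T)" "((\<lambda>s. \<Sum>a\<in>A. f a s) has_real_derivative D2) (at t within T)"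
    by auto
  then have "((\<lambda>s. f x s + (\<Sum>a\<in>A. f a s)) has_real_derivative D1 + D2) (at t within T)" by (rule DERIV_add)
  then show ?case using insert by auto
qed

lemma coeff_deriv:
  assumes rep: "\<forall>l. \<forall>t\<in>T. J l t = (\<Sum>\<beta>\<in>Ad d. c \<beta> t * mon \<beta> l)"
    and dJ: "\<forall>l. \<forall>t\<in>T. \<exists>D. ((\<lambda>s. J l s) has_real_derivative D) (at t within T)"
  shows "\<alpha> \<in> Ad d \<Longrightarrow> \<forall>t\<in>T. \<exists>D. ((\<lambda>s. c \<alpha> s) has_real_derivative D) (at t within T)"
proof (induction "d - deg \<alpha>" arbitrary: \<alpha> rule: less_induct)
  case less
  show ?case proof
  fix t assume tT: "t \<in> T"
  define e where "e \<beta> = EE \<alpha> (mon \<beta>)" for \<beta>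
  have ea: "e \<alpha> \<noteq> 0" using EE_mon_self by (simp add: e_def)
  have key: "c \<alpha> s = (EE \<alpha> (\<lambda>l. J l s) - (\<Sum>\<beta>\<in>Ad d - {\<alpha>}. c \<beta> s * e \<beta>)) / e \<alpha>" if "s \<in> T" for s
  proof -
    have "(\<lambda>l. J l s) = (\<lambda>l. \<Sum>\<beta>\<in>Ad d. c \<beta> s * mon \<beta> l)" using rep that by auto
    then have "EE \<alpha> (\<lambda>l. J l s) = (\<Sum>\<beta>\<in>Ad d. c \<beta> s * e \<beta>)"
      by (simp add: EE_lin finite_Ad e_def)
    also have "\<dots> = c \<alpha> s * e \<alpha> + (\<Sum>\<beta>\<in>Ad d - {\<alpha>}. c \<beta> s * e \<beta>)"
      using sum.remove[OF finite_Ad less.prems, of "\<lambda>\<beta>. c \<beta> s * e \<beta>"] by simp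
    finally show ?thesis using ea by (simp add: field_simps)
  qed
  have d1: "\<exists>D. ((\<lambda>s. EE \<alpha> (\<lambda>l. J l s)) has_real_derivative D) (at t within T)"
    unfolding EE_def
  proof (intro ex_deriv_sum finite_bx ballI)
    fix \<gamma> assume "\<gamma> \<in> bx \<alpha>"
    obtain D where "((\<lambda>s. J (pt \<gamma>) s) has_real_derivative D) (at t within T)" using dJ tT by blast
    then show "\<exists>D. ((\<lambda>s. (\<Prod>i\<in>UNIV. (-1)^(\<gamma> i) * real (\<alpha> i choose \<gamma> i)) * J (pt \<gamma>) s)
       has_real_derivative D) (at t within T)" by (blast intro: DERIV_cmult)
  qed
  have d2: "\<exists>D. ((\<lambda>s. \<Sum>\<beta>\<in>Ad d - {\<alpha>}. c \<beta> s * e \<beta>) has_real_derivative D) (at t within T)"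
  proof (intro ex_deriv_sum ballI)
    show "finite (Ad d - {\<alpha>})" by (simp add: finite_Ad)
    fix \<beta> assume b: "\<beta> \<in> Ad d - {\<alpha>}"
    show "\<exists>D. ((\<lambda>s. c \<beta> s * e \<beta>) has_real_derivative D) (at t within T)"
    proof (cases "e \<beta> = 0")
      case True then show ?thesis by (auto intro: DERIV_const)
    next
      case False
      then have "\<forall>i. \<alpha> i \<le> \<beta> i" using EE_mon_zero by (auto simp: e_def)
      then have "deg \<alpha> < deg \<beta>" using le_deg b by auto
      moreover have "deg \<beta> \<le> d" using b by (simp add: Ad_def)
      ultimately have "d - deg \<beta> < d - deg \<alpha>" by simp
      then obtain D where "((\<lambda>s. c \<beta> s) has_real_derivative D) (at t within T)"
        using less.hyps[of \<beta>] b tT by auto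
      then show ?thesis by (blast intro: DERIV_cmult_right)
    qed
  qed
  obtain D1 D2 where "((\<lambda>s. EE \<alpha> (\<lambda>l. J l s)) has_real_derivative D1) (at t within T)"
     "((\<lambda>s. \<Sum>\<beta>\<in>Ad d - {\<alpha>}. c \<beta> s * e \<beta>) has_real_derivative D2) (at t within T)"
    using d1 d2 by blast
  then have "((\<lambda>s. (EE \<alpha> (\<lambda>l. J l s) - (\<Sum>\<beta>\<in>Ad d - {\<alpha>}. c \<beta> s * e \<beta>)) / e \<alpha>)
       has_real_derivative (D1 - D2) / e \<alpha>) (at t within T)"
    by (intro DERIV_cdivide DERIV_diff)
  then have "((\<lambda>s. c \<alpha> s) has_real_derivative (D1 - D2) / e \<alpha>) (at t within T)"
    by (rule has_field_derivative_transform_within[where d=1]) (use tT key in auto)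
  then show "\<exists>D. ((\<lambda>s. c \<alpha> s) has_real_derivative D) (at t within T)" by blast
  qed
qed




lemma deg0_mon: "deg \<alpha> = 0 \<Longrightarrow> mon \<alpha> l = 1"
  by (simp add: deg_def mon_def)

lemma deg_Suc_split:
  assumes h: "deg \<alpha> = Suc k"
  shows "\<exists>i \<alpha>'. deg \<alpha>' = k \<and> (\<forall>l. mon \<alpha> l = l$i * mon \<alpha>' l)"
proof -
  have "\<exists>i. \<alpha> i \<noteq> 0"
  proof (rule ccontr)
    assume "\<not> (\<exists>i. \<alpha> i \<noteq> 0)"
    then have "\<alpha> = (\<lambda>i. 0)" by auto
    then show False using h by simp
  qed
  then obtain i where i: "\<alpha> i \<noteq> 0" by blast
  define \<alpha>' where "\<alpha>' = \<alpha>(i := \<alpha> i - 1)"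
  have r: "(\<Sum>j\<in>UNIV-{i}. \<alpha>' j) = (\<Sum>j\<in>UNIV-{i}. \<alpha> j)"
    by (intro sum.cong) (auto simp: \<alpha>'_def)
  have "deg \<alpha> = \<alpha> i + (\<Sum>j\<in>UNIV-{i}. \<alpha> j)" unfolding deg_def by (rule sum.remove) auto
  moreover have "deg \<alpha>' = \<alpha>' i + (\<Sum>j\<in>UNIV-{i}. \<alpha>' j)" unfolding deg_def by (rule sum.remove) auto
  ultimately have d: "deg \<alpha>' = k" using h i r by (simp add: \<alpha>'_def)
  have "mon \<alpha> l = l$i * mon \<alpha>' l" for l
  proof -
    have r2: "(\<Prod>j\<in>UNIV-{i}. (l$j)^(\<alpha>' j)) = (\<Prod>j\<in>UNIV-{i}. (l$j)^(\<alpha> j))"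
      by (intro prod.cong) (auto simp: \<alpha>'_def)
    have "mon \<alpha> l = (l$i)^(\<alpha> i) * (\<Prod>j\<in>UNIV-{i}. (l$j)^(\<alpha> j))" unfolding mon_def by (rule prod.remove) auto
    moreover have "mon \<alpha>' l = (l$i)^(\<alpha>' i) * (\<Prod>j\<in>UNIV-{i}. (l$j)^(\<alpha>' j))" unfolding mon_def by (rule prod.remove) auto
    moreover have "(l$i)^(\<alpha> i) = l$i * (l$i)^(\<alpha> i - 1)" using i by (cases "\<alpha> i") auto
    ultimately show ?thesis using r2 by (simp add: \<alpha>'_def)
  qed
  then show ?thesis using d by blast
qed

lemma mon_shift_diff: "polyk (deg \<alpha> - 1) (\<lambda>l. mon \<alpha> (l + b) - mon \<alpha> l)"
proof (induction "deg \<alpha>" arbitrary: \<alpha>)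
  case 0
  then have "(\<lambda>l. mon \<alpha> (l + b) - mon \<alpha> l) = (\<lambda>l. 0)" by (simp add: deg0_mon)
  then show ?case by (simp add: polyk_zero)
next
  case (Suc k)
  obtain i \<alpha>' where s: "deg \<alpha>' = k" "\<forall>l. mon \<alpha> l = l$i * mon \<alpha>' l"
    using deg_Suc_split[OF Suc.hyps(2)[symmetric]] by blast
  have eq: "(\<lambda>l. mon \<alpha> (l + b) - mon \<alpha> l) =
     (\<lambda>l. l$i * (mon \<alpha>' (l + b) - mon \<alpha>' l) + b$i * mon \<alpha>' (l + b))"
    using s by (auto simp: algebra_simps)
  show ?case
  proof (cases k)
    case 0
    then have "(\<lambda>l. mon \<alpha> (l + b) - mon \<alpha> l) = (\<lambda>l. b$i)" using eq s by (simp add: deg0_mon)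
    then show ?thesis by (simp add: polyk_const)
  next
    case (Suc k')
    have p1: "polyk (1 + (k - 1)) (\<lambda>l. l$i * (mon \<alpha>' (l + b) - mon \<alpha>' l))"
      using Suc.hyps(1)[of \<alpha>'] s by (intro polyk_mult polyk_coord) auto
    have p2: "polyk k (\<lambda>l. b$i * mon \<alpha>' (l + b))"
      using s by (intro polyk_cmult polyk_shift polyk_mon_deg) auto
    have "polyk k (\<lambda>l. l$i * (mon \<alpha>' (l + b) - mon \<alpha>' l) + b$i * mon \<alpha>' (l + b))"
      using p1 p2 Suc by (intro polyk_add) auto
    moreover have "deg \<alpha> - 1 = k" using Suc.hyps(2) by simp
    ultimately show ?thesis using eq by simp
  qed
qed

definition Dmon :: "('n::finite \<Rightarrow> nat) \<Rightarrow> real^'n \<Rightarrow> real^'n \<Rightarrow> real" where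
  "Dmon \<alpha> l = (\<lambda>y. \<Sum>i\<in>UNIV. (of_nat (\<alpha> i) * y$i * (l$i)^(\<alpha> i - 1)) * (\<Prod>j\<in>UNIV-{i}. (l$j)^(\<alpha> j)))"

lemma mon_has_deriv: "(mon \<alpha> has_derivative Dmon \<alpha> l) (at l)"
proof -
  have c: "((\<lambda>x. x $ i) has_derivative (\<lambda>y. y $ i)) (at l)" for i :: 'a
    by (rule bounded_linear_imp_has_derivative) (rule bounded_linear_vec_nth)
  have "((\<lambda>x. \<Prod>i\<in>UNIV. (x$i)^(\<alpha> i)) has_derivative
      (\<lambda>y. \<Sum>i\<in>UNIV. (of_nat (\<alpha> i) * y$i * (l$i)^(\<alpha> i - 1)) * (\<Prod>j\<in>UNIV-{i}. (l$j)^(\<alpha> j)))) (at l)"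
    by (intro has_derivative_prod has_derivative_power c)
  then show ?thesis unfolding Dmon_def mon_def[abs_def] .
qed

lemma polyk_Dmon:
  assumes v: "\<And>i. polyk 1 (\<lambda>l. v l $ i)"
  shows "polyk (deg \<alpha>) (\<lambda>l. Dmon \<alpha> l (v l))"
  unfolding Dmon_def
proof (intro polyk_sum, simp)
  fix i
  show "polyk (deg \<alpha>) (\<lambda>l. of_nat (\<alpha> i) * v l $ i * (l$i)^(\<alpha> i - 1) * (\<Prod>j\<in>UNIV-{i}. (l$j)^(\<alpha> j)))"
  proof (cases "\<alpha> i = 0")
    case True then show ?thesis by (simp add: polyk_zero)
  next
    case False
    have "polyk (1 + (\<alpha> i - 1) * 1 + (\<Sum>j\<in>UNIV-{i}. \<alpha> j * 1))
        (\<lambda>l. v l $ i * (l$i)^(\<alpha> i - 1) * (\<Prod>j\<in>UNIV-{i}. (l$j)^(\<alpha> j)))"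
      by (intro polyk_mult polyk_power polyk_prod v polyk_coord) auto
    moreover have "1 + (\<alpha> i - 1) * 1 + (\<Sum>j\<in>UNIV-{i}. \<alpha> j * 1) = deg \<alpha>"
    proof -
      have "deg \<alpha> = \<alpha> i + (\<Sum>j\<in>UNIV-{i}. \<alpha> j)" unfolding deg_def by (rule sum.remove) auto
      then show ?thesis using False by simp
    qed
    ultimately show ?thesis using polyk_cmult[of _ _ "of_nat (\<alpha> i)"] by (simp add: mult.assoc)
  qed
qed

definition isquad :: "(real^'n::finite \<Rightarrow> real) \<Rightarrow> bool" where
  "isquad f \<longleftrightarrow> (\<exists>a b (M::real^'n^'n). \<forall>l. f l = a + b \<bullet> l + l \<bullet> (M *v l))"

lemma isquad_add: "isquad f \<Longrightarrow> isquad g \<Longrightarrow> isquad (\<lambda>l. f l + g l)"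
  unfolding isquad_def
proof (elim exE)
  fix a b M a' b' M' assume f: "\<forall>l. f l = a + b \<bullet> l + l \<bullet> (M *v l)" and g: "\<forall>l. g l = a' + b' \<bullet> l + l \<bullet> (M' *v l)"
  show "\<exists>a b (M::real^'a^'a). \<forall>l. f l + g l = a + b \<bullet> l + l \<bullet> (M *v l)"
    by (rule exI[of _ "a+a'"], rule exI[of _ "b+b'"], rule exI[of _ "M+M'"])
       (simp add: f g inner_add_left inner_add_right matrix_vector_mult_add_rdistrib)
qed

lemma smat_vec: "(c *\<^sub>R (M::real^'n^'m)) *v l = c *\<^sub>R (M *v l)"
  by (simp add: vec_eq_iff matrix_vector_mult_def sum_distrib_left mult.assoc)

lemma isquad_cmult: "isquad f \<Longrightarrow> isquad (\<lambda>l. c * f l)"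
  unfolding isquad_def
proof (elim exE)
  fix a b M assume f: "\<forall>l. f l = a + b \<bullet> l + l \<bullet> (M *v l)"
  show "\<exists>a b (M::real^'a^'a). \<forall>l. c * f l = a + b \<bullet> l + l \<bullet> (M *v l)"
    by (rule exI[of _ "c*a"], rule exI[of _ "c *\<^sub>R b"], rule exI[of _ "c *\<^sub>R M"])
       (simp add: f algebra_simps smat_vec)
qed

lemma isquad_sum: "finite A \<Longrightarrow> (\<And>a. a \<in> A \<Longrightarrow> isquad (f a)) \<Longrightarrow> isquad (\<lambda>l. \<Sum>a\<in>A. f a l)"
proof (induction A rule: finite_induct)
  case empty
  then show ?case unfolding isquad_def by (rule_tac x=0 in exI, rule_tac x=0 in exI, rule_tac x=0 in exI) simp
next
  case (insert x A) then show ?case by (auto intro: isquad_add)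
qed

lemma quad_mon: assumes "deg \<alpha> \<le> 2" shows "isquad (mon \<alpha>)"
proof -
  consider "deg \<alpha> = 0" | "deg \<alpha> = Suc 0" | "deg \<alpha> = Suc (Suc 0)" using assms by linarith
  then show ?thesis
  proof cases
    case 1 then show ?thesis unfolding isquad_def
      by (rule_tac x=1 in exI, rule_tac x=0 in exI, rule_tac x=0 in exI) (simp add: deg0_mon)
  next
    case 2
    then obtain i \<alpha>' where s: "deg \<alpha>' = 0" "\<forall>l. mon \<alpha> l = l$i * mon \<alpha>' l"
      using deg_Suc_split by blast
    then show ?thesis unfolding isquad_def
      by (rule_tac x=0 in exI, rule_tac x="axis i 1" in exI, rule_tac x=0 in exI)
         (simp add: deg0_mon inner_axis')
  next
    case 3
    then obtain i \<alpha>' where s: "deg \<alpha>' = Suc 0" "\<forall>l. mon \<alpha> l = l$i * mon \<alpha>' l"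
      using deg_Suc_split by blast
    then obtain j \<alpha>'' where s2: "deg \<alpha>'' = 0" "\<forall>l. mon \<alpha>' l = l$j * mon \<alpha>'' l"
      using deg_Suc_split by blast
    define M :: "real^'a^'a" where "M = (\<chi> p q. if p = i \<and> q = j then 1 else 0)"
    have "l \<bullet> (M *v l) = l$i * l$j" for l
    proof -
      have "M *v l = (\<chi> p. if p = i then l$j else 0)"
      proof -
        have "(\<Sum>q\<in>UNIV. (if q = j then 1 else 0) * l$q) = l$j" by (simp add: sum_ind)
        then show ?thesis by (auto simp: M_def matrix_vector_mult_def vec_eq_iff)
      qed
      then show ?thesis by (simp add: inner_vec_def if_distrib sum.delta cong: if_cong)
    qed
    then show ?thesis unfolding isquad_def using s s2
      by (rule_tac x=0 in exI, rule_tac x=0 in exI, rule_tac x=M in exI) (simp add: deg0_mon)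
  qed
qed

lemma norm_axis_eq: "norm (axis i (x::'a::real_normed_vector) :: 'a^'n) = norm x"
proof -
  have "(\<Sum>j\<in>UNIV. (norm ((axis i x :: 'a^'n) $ j))\<^sup>2) = (\<Sum>j\<in>UNIV. if j = i then (norm x)\<^sup>2 else 0)"
    by (intro sum.cong) (auto simp: axis_def)
  then show ?thesis by (simp add: norm_vec_def L2_set_def)
qed

lemma bl_axis: "bounded_linear (axis i :: 'a::real_normed_vector \<Rightarrow> 'a^'n)"
proof (rule bounded_linear_intro[where K=1])
  show "axis i (x + y) = (axis i x + axis i y :: 'a^'n)" for x y by (simp add: vec_eq_iff axis_def)
  show "axis i (r *\<^sub>R x) = (r *\<^sub>R axis i x :: 'a^'n)" for r x by (simp add: vec_eq_iff axis_def)
  show "norm (axis i x :: 'a^'n) \<le> norm x * 1" for x by (simp add: norm_axis_eq)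
qed

lemma vec_sum_axis: "(x::'a::real_normed_vector^'n) = (\<Sum>i\<in>UNIV. axis i (x $ i))"
  by (simp add: vec_eq_iff axis_def sum_component if_distrib sum.delta cong: if_cong)

lemma vec_has_vector_derivative:
  fixes f :: "real \<Rightarrow> 'a::real_normed_vector^'n"
  assumes "\<And>i. ((\<lambda>s. f s $ i) has_vector_derivative f' $ i) F"
  shows "(f has_vector_derivative f') F"
proof -
  have "((\<lambda>s. \<Sum>i\<in>UNIV. axis i (f s $ i)) has_vector_derivative (\<Sum>i\<in>UNIV. axis i (f' $ i))) F"
    by (intro has_vector_derivative_sum bounded_linear.has_vector_derivative[OF bl_axis] assms)
  then show ?thesis by (simp flip: vec_sum_axis)
qed

lemma gronwall0:
  fixes y y' :: "real \<Rightarrow> real"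
  assumes ab: "a \<le> b"
    and der: "\<And>t. t \<in> {a..b} \<Longrightarrow> (y has_real_derivative y' t) (at t within {a..b})"
    and nn: "\<And>t. t \<in> {a..b} \<Longrightarrow> y t \<ge> 0"
    and ineq: "\<And>t. t \<in> {a..b} \<Longrightarrow> y' t \<ge> - K * y t"
    and yb: "y b = 0"
  shows "\<And>t. t \<in> {a..b} \<Longrightarrow> y t = 0"
proof -
  fix t assume t: "t \<in> {a..b}"
  define z where "z s = y s * exp (K * s)" for s
  have dz: "(z has_real_derivative (y' s * exp (K * s) + y s * (exp (K * s) * K))) (at s within {a..b})"
    if "s \<in> {a..b}" for s
    unfolding z_def using der[OF that]
    by (auto intro!: derivative_eq_intros)
  have cz: "continuous_on {a..b} z"
    using dz DERIV_continuous continuous_on_eq_continuous_within by blast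
  have "z t \<le> z b"
  proof (rule DERIV_nonneg_imp_increasing_open[of t b z])
    show "t \<le> b" using t by simp
    show "continuous_on {t..b} z" by (rule continuous_on_subset[OF cz]) (use t in auto)
    fix x assume x: "t < x" "x < b"
    then have xab: "x \<in> {a..b}" "a < x" using t by auto
    have "at x within {a..b} = at x" using xab x by (intro at_within_Icc_at) auto
    then have "(z has_real_derivative (y' x * exp (K * x) + y x * (exp (K * x) * K))) (at x)"
      using dz[OF xab(1)] by simp
    moreover have "y' x * exp (K * x) + y x * (exp (K * x) * K) \<ge> 0"
    proof -
      have "(y' x + K * y x) * exp (K * x) \<ge> 0" using ineq[OF xab(1)] by simp
      then show ?thesis by (simp add: algebra_simps)
    qed
    ultimately show "\<exists>y. (z has_real_derivative y) (at x) \<and> 0 \<le> y" by blast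
  qed
  then have "y t * exp (K * t) \<le> 0" using yb by (simp add: z_def)
  then have "y t \<le> 0" by (simp add: mult_le_0_iff)
  then show "y t = 0" using nn[OF t] by simp
qed



lemma deriv_uniq_Icc:
  fixes f :: "real \<Rightarrow> real"
  assumes "t0 < tf" "t \<in> {t0..tf}" "(f has_real_derivative D1) (at t within {t0..tf})"
    "(f has_real_derivative D2) (at t within {t0..tf})"
  shows "D1 = D2"
  using assms unfolding has_real_derivative_iff_has_vector_derivative interval_cbox
  by (metis vector_derivative_unique_within_closed_interval)
lemma matrix_sum_scale: "(M::real^'n^'m) *v (\<Sum>g\<in>A. c g *\<^sub>R v g) = (\<Sum>g\<in>A. c g *\<^sub>R (M *v v g))"
proof -
  have lin: "linear ((*v) M)" by simp
  show ?thesis by (simp add: linear_sum[OF lin] linear_scale[OF lin])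
qed
lemma cs_sum:
  fixes f :: "'a \<Rightarrow> real"
  assumes "finite A"
  shows "(\<Sum>a\<in>A. f a)^2 \<le> real (card A) * (\<Sum>a\<in>A. (f a)^2)"
proof -
  have "(\<Sum>a\<in>A. f a)^2 = (\<Sum>a\<in>A. \<Sum>b\<in>A. f a * f b)"
    by (simp add: power2_eq_square sum_product)
  also have "\<dots> \<le> (\<Sum>a\<in>A. \<Sum>b\<in>A. ((f a)^2 + (f b)^2) / 2)"
  proof (intro sum_mono)
    fix a b
    have "0 \<le> (f a - f b)^2" by simp
    then show "f a * f b \<le> ((f a)^2 + (f b)^2) / 2" by (simp add: power2_eq_square algebra_simps)
  qed
  also have "\<dots> = real (card A) * (\<Sum>a\<in>A. (f a)^2)"
    by (simp add: sum.distrib sum_divide_distrib[symmetric] sum_distrib_left[symmetric] sum.swap[of "\<lambda>a b. (f b)^2"] field_simps)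
  finally show ?thesis .
qed

lemma ext_rep:
  assumes c: "\<forall>l. p l = (\<Sum>\<alpha>\<in>Ad k. c \<alpha> * mon \<alpha> l)" and k: "k \<le> D"
  shows "\<forall>l. p l = (\<Sum>\<alpha>\<in>Ad D. (if \<alpha> \<in> Ad k then c \<alpha> else 0) * mon \<alpha> l)"
proof
  fix l
  have sub: "Ad k \<subseteq> Ad D" using k by (auto simp: Ad_def)
  have "(\<Sum>\<alpha>\<in>Ad D. (if \<alpha> \<in> Ad k then c \<alpha> else 0) * mon \<alpha> l)
     = (\<Sum>\<alpha>\<in>Ad D. if \<alpha> \<in> Ad k then c \<alpha> * mon \<alpha> l else 0)"
    by (intro sum.cong) auto
  also have "\<dots> = (\<Sum>\<alpha>\<in>Ad k. c \<alpha> * mon \<alpha> l)"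
  proof -
    have eq: "Ad D \<inter> Ad k = Ad k" using sub by blast
    show ?thesis using sum.inter_restrict[OF finite_Ad, of "\<lambda>\<alpha>. c \<alpha> * mon \<alpha> l" D "Ad k"] unfolding eq by simp
  qed
  finally show "p l = (\<Sum>\<alpha>\<in>Ad D. (if \<alpha> \<in> Ad k then c \<alpha> else 0) * mon \<alpha> l)" using c by simp
qed

lemma rep_D:
  assumes "polyk k p" "k \<le> D"
  shows "\<exists>e. (\<forall>l. p l = (\<Sum>\<alpha>\<in>Ad D. e \<alpha> * mon \<alpha> l)) \<and> (\<forall>\<alpha>. k < deg \<alpha> \<longrightarrow> e \<alpha> = 0)"
proof -
  obtain c where c: "\<forall>l. p l = (\<Sum>\<alpha>\<in>Ad k. c \<alpha> * mon \<alpha> l)" using assms by (auto simp: polyk_def)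
  show ?thesis
    by (rule exI[of _ "\<lambda>\<alpha>. if \<alpha> \<in> Ad k then c \<alpha> else 0"]) (use ext_rep[OF c assms(2)] in \<open>auto simp: Ad_def\<close>)
qed

lemma polyk_inner:
  assumes "\<And>i. polyk a (\<lambda>l. u l $ i)" "\<And>i. polyk b (\<lambda>l. v l $ i)"
  shows "polyk (a + b) (\<lambda>l. u l \<bullet> v l)"
  unfolding inner_vec_def by (simp, intro polyk_sum polyk_mult assms) auto

lemma polyk_matvec:
  assumes "\<And>i. polyk a (\<lambda>l. v l $ i)"
  shows "polyk a (\<lambda>l. (M *v v l) $ i)"
  unfolding matrix_vector_mult_def by (simp, intro polyk_sum polyk_cmult assms) auto




lemma stepA:
  fixes B Q Si F :: "real^'n^'n" and \<omega> t0 tf :: real and lam0 :: "real^'n"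
    and J :: "real^'n \<Rightarrow> real \<Rightarrow> real" and c :: "('n \<Rightarrow> nat) \<Rightarrow> real \<Rightarrow> real"
  assumes times: "t0 < tf"
    and rep: "\<forall>l. \<forall>t\<in>{t0..tf}. J l t = (\<Sum>\<alpha>\<in>Ad d. c \<alpha> t * mon \<alpha> l)"
    and HJB: "\<forall>l. \<forall>t\<in>{t0..tf}. \<exists>Jt grad.
        ((\<lambda>s. J l s) has_real_derivative Jt) (at t within {t0..tf}) \<and>
        ((\<lambda>x. J x t) has_derivative (\<lambda>h. grad \<bullet> h)) (at l) \<and>
        0 = Jt + (\<omega> *\<^sub>R lam0 - \<omega> *\<^sub>R l) \<bullet> grad + l \<bullet> DeltaB B J l t
            - (1/2) * (l \<bullet> (Q *v l))
            - (1/2) * (DeltaB B J l t \<bullet> (Si *v DeltaB B J l t))"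
    and terminal: "\<forall>l. J l tf = - (1/2) * (l \<bullet> (F *v l))"
  shows "\<forall>t\<in>{t0..tf}. \<forall>\<alpha>\<in>Ad d. 3 \<le> deg \<alpha> \<longrightarrow> c \<alpha> t = 0"
proof -
  define T where "T = {t0..tf}"
  define P where "P l t x g \<longleftrightarrow> ((\<lambda>s. J l s) has_real_derivative x) (at t within T) \<and>
        ((\<lambda>y. J y t) has_derivative (\<lambda>h. g \<bullet> h)) (at l) \<and>
        0 = x + (\<omega> *\<^sub>R lam0 - \<omega> *\<^sub>R l) \<bullet> g + l \<bullet> DeltaB B J l t
            - (1/2) * (l \<bullet> (Q *v l))
            - (1/2) * (DeltaB B J l t \<bullet> (Si *v DeltaB B J l t))" for l t x g
  define Jt where "Jt l t = (SOME x. \<exists>g. P l t x g)" for l t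
  define grad where "grad l t = (SOME g. P l t (Jt l t) g)" for l t
  have hP: "P l t (Jt l t) (grad l t)" if "t \<in> T" for l t
  proof -
    have "\<exists>x g. P l t x g" using HJB that unfolding P_def T_def by blast
    then have "\<exists>g. P l t (Jt l t) g" unfolding Jt_def by (rule someI_ex)
    then show ?thesis unfolding grad_def by (rule someI_ex)
  qed
  have tfT: "tf \<in> T" using times by (simp add: T_def)
  have dJ: "\<forall>l. \<forall>t\<in>T. \<exists>D. ((\<lambda>s. J l s) has_real_derivative D) (at t within T)"
    using hP unfolding P_def by blast
  have rep': "\<forall>l. \<forall>t\<in>T. J l t = (\<Sum>\<alpha>\<in>Ad d. c \<alpha> t * mon \<alpha> l)" using rep by (simp add: T_def)
  define cd where "cd \<alpha> t = (SOME D. ((\<lambda>s. c \<alpha> s) has_real_derivative D) (at t within T))" for \<alpha> t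
  have cdh: "((\<lambda>s. c \<alpha> s) has_real_derivative cd \<alpha> t) (at t within T)" if "\<alpha> \<in> Ad d" "t \<in> T" for \<alpha> t
    unfolding cd_def by (rule someI_ex) (use coeff_deriv[OF rep' dJ that(1)] that(2) in blast)
  have JtE: "Jt l t = (\<Sum>\<beta>\<in>Ad d. cd \<beta> t * mon \<beta> l)" if "t \<in> T" for l t
  proof -
    have "((\<lambda>s. \<Sum>\<beta>\<in>Ad d. c \<beta> s * mon \<beta> l) has_real_derivative (\<Sum>\<beta>\<in>Ad d. cd \<beta> t * mon \<beta> l)) (at t within T)"
      by (intro DERIV_sum DERIV_cmult_right cdh that)
    then have "((\<lambda>s. J l s) has_real_derivative (\<Sum>\<beta>\<in>Ad d. cd \<beta> t * mon \<beta> l)) (at t within T)"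
      by (rule has_field_derivative_transform_within[where d=1]) (use that rep' in auto)
    moreover have "((\<lambda>s. J l s) has_real_derivative Jt l t) (at t within T)" using hP[OF that] by (simp add: P_def)
    ultimately show ?thesis using deriv_uniq_Icc[OF times] that unfolding T_def by metis
  qed
  have gradE: "(\<omega> *\<^sub>R lam0 - \<omega> *\<^sub>R l) \<bullet> grad l t = (\<Sum>\<beta>\<in>Ad d. c \<beta> t * Dmon \<beta> l (\<omega> *\<^sub>R lam0 - \<omega> *\<^sub>R l))"
    if "t \<in> T" for l t
  proof -
    have "((\<lambda>x. \<Sum>\<beta>\<in>Ad d. c \<beta> t * mon \<beta> x) has_derivative (\<lambda>h. \<Sum>\<beta>\<in>Ad d. c \<beta> t * Dmon \<beta> l h)) (at l)"
      by (intro has_derivative_sum has_derivative_mult_right mon_has_deriv)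
    moreover have "(\<lambda>x. J x t) = (\<lambda>x. \<Sum>\<beta>\<in>Ad d. c \<beta> t * mon \<beta> x)" using rep' that by auto
    ultimately have "((\<lambda>x. J x t) has_derivative (\<lambda>h. \<Sum>\<beta>\<in>Ad d. c \<beta> t * Dmon \<beta> l h)) (at l)" by simp
    moreover have "((\<lambda>x. J x t) has_derivative (\<lambda>h. grad l t \<bullet> h)) (at l)" using hP[OF that] by (simp add: P_def)
    ultimately have "(\<lambda>h. grad l t \<bullet> h) = (\<lambda>h. \<Sum>\<beta>\<in>Ad d. c \<beta> t * Dmon \<beta> l h)"
      by (rule has_derivative_unique[rotated])
    from fun_cong[OF this, of "\<omega> *\<^sub>R lam0 - \<omega> *\<^sub>R l"] show ?thesis by (simp add: inner_commute)
  qed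
  define Dm where "Dm \<beta> l = (\<chi> i. mon \<beta> (l + col B i) - mon \<beta> l)" for \<beta> l
  have DeltaE: "DeltaB B J l t = (\<Sum>\<beta>\<in>Ad d. c \<beta> t *\<^sub>R Dm \<beta> l)" if "t \<in> T" for l t
    using rep' that
    by (simp add: DeltaB_def Dm_def vec_eq_iff sum_component sum_subtractf[symmetric] right_diff_distrib)
  define Lp where "Lp \<beta> l = Dmon \<beta> l (\<omega> *\<^sub>R lam0 - \<omega> *\<^sub>R l) + l \<bullet> Dm \<beta> l" for \<beta> l
  define Np where "Np \<beta> \<gamma> l = Dm \<beta> l \<bullet> (Si *v Dm \<gamma> l)" for \<beta> \<gamma> l
  define Kp where "Kp l = - (1/2) * (l \<bullet> (Q *v l))" for l
  have ident: "0 = (\<Sum>\<beta>\<in>Ad d. cd \<beta> t * mon \<beta> l) + (\<Sum>\<beta>\<in>Ad d. c \<beta> t * Lp \<beta> l) + Kp l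
      - (1/2) * (\<Sum>\<beta>\<in>Ad d. \<Sum>\<gamma>\<in>Ad d. (c \<beta> t * c \<gamma> t) * Np \<beta> \<gamma> l)" if "t \<in> T" for l t
  proof -
    have h: "0 = Jt l t + (\<omega> *\<^sub>R lam0 - \<omega> *\<^sub>R l) \<bullet> grad l t + l \<bullet> DeltaB B J l t
            - (1/2) * (l \<bullet> (Q *v l)) - (1/2) * (DeltaB B J l t \<bullet> (Si *v DeltaB B J l t))"
      using hP[OF that] by (simp add: P_def)
    have e1: "l \<bullet> DeltaB B J l t = (\<Sum>\<beta>\<in>Ad d. c \<beta> t * (l \<bullet> Dm \<beta> l))"
      by (simp add: DeltaE[OF that] inner_sum_right)
    have e2: "DeltaB B J l t \<bullet> (Si *v DeltaB B J l t) = (\<Sum>\<beta>\<in>Ad d. \<Sum>\<gamma>\<in>Ad d. (c \<beta> t * c \<gamma> t) * Np \<beta> \<gamma> l)"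
      by (simp add: DeltaE[OF that] matrix_sum_scale inner_sum_left inner_sum_right Np_def sum_distrib_left mult_ac)
         (subst sum.swap, simp add: mult_ac)
    have e3: "(\<Sum>\<beta>\<in>Ad d. c \<beta> t * Lp \<beta> l) = (\<Sum>\<beta>\<in>Ad d. c \<beta> t * Dmon \<beta> l (\<omega> *\<^sub>R lam0 - \<omega> *\<^sub>R l))
       + (\<Sum>\<beta>\<in>Ad d. c \<beta> t * (l \<bullet> Dm \<beta> l))"
      by (simp add: Lp_def algebra_simps sum.distrib)
    show ?thesis using h e1 e2 e3 unfolding JtE[OF that] gradE[OF that] Kp_def by simp
  qed
  define D where "D = 2 * d + 2"
  have vpoly: "polyk 1 (\<lambda>l. (\<omega> *\<^sub>R lam0 - \<omega> *\<^sub>R l) $ i)" for i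
    by (simp only: vector_minus_component vector_scaleR_component real_scaleR_def, intro polyk_diff polyk_const polyk_cmult polyk_coord)
  have Dmpoly: "polyk (deg \<beta> - 1) (\<lambda>l. Dm \<beta> l $ i)" for \<beta> i
    unfolding Dm_def using mon_shift_diff[of \<beta> "col B i"] by simp
  have Lpoly: "polyk (max 1 (deg \<beta>)) (Lp \<beta>)" for \<beta>
  proof -
    have "polyk (deg \<beta>) (\<lambda>l. Dmon \<beta> l (\<omega> *\<^sub>R lam0 - \<omega> *\<^sub>R l))" by (rule polyk_Dmon[OF vpoly])
    then have a: "polyk (max 1 (deg \<beta>)) (\<lambda>l. Dmon \<beta> l (\<omega> *\<^sub>R lam0 - \<omega> *\<^sub>R l))" by (rule polyk_le) simp
    have "polyk (1 + (deg \<beta> - 1)) (\<lambda>l. l \<bullet> Dm \<beta> l)"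
      by (rule polyk_inner[of 1 "\<lambda>l. l" "deg \<beta> - 1" "Dm \<beta>", OF polyk_coord Dmpoly])
    then have b: "polyk (max 1 (deg \<beta>)) (\<lambda>l. l \<bullet> Dm \<beta> l)" by (rule polyk_le) simp
    show ?thesis unfolding Lp_def by (rule polyk_add[OF a b])
  qed
  have Npoly: "polyk ((deg \<beta> - 1) + (deg \<gamma> - 1)) (Np \<beta> \<gamma>)" for \<beta> \<gamma>
    unfolding Np_def
    by (rule polyk_inner[of "deg \<beta> - 1" "Dm \<beta>" "deg \<gamma> - 1" "\<lambda>l. Si *v Dm \<gamma> l", OF Dmpoly polyk_matvec[OF Dmpoly]])
  have Kpoly: "polyk 2 Kp" for \<beta> \<gamma>
  proof -
    have "polyk (1 + 1) (\<lambda>l. l \<bullet> (Q *v l))"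
      by (rule polyk_inner[of 1 "\<lambda>l. l" 1 "\<lambda>l. Q *v l", OF polyk_coord polyk_matvec[OF polyk_coord]])
    then have "polyk 2 (\<lambda>l. l \<bullet> (Q *v l))" by (simp add: numeral_2_eq_2)
    from polyk_cmult[OF this, of "-(1/2)"] show ?thesis unfolding Kp_def by simp
  qed
  have exL: "\<exists>e. (\<forall>l. Lp \<beta> l = (\<Sum>\<alpha>\<in>Ad D. e \<alpha> * mon \<alpha> l)) \<and> (\<forall>\<alpha>. max 1 (deg \<beta>) < deg \<alpha> \<longrightarrow> e \<alpha> = 0)"
    if "\<beta> \<in> Ad d" for \<beta>
    using that by (intro rep_D Lpoly) (auto simp: D_def Ad_def)
  define eL where "eL \<beta> = (SOME e. (\<forall>l. Lp \<beta> l = (\<Sum>\<alpha>\<in>Ad D. e \<alpha> * mon \<alpha> l)) \<and> (\<forall>\<alpha>. max 1 (deg \<beta>) < deg \<alpha> \<longrightarrow> e \<alpha> = 0))" for \<beta>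
  have eLh: "(\<forall>l. Lp \<beta> l = (\<Sum>\<alpha>\<in>Ad D. eL \<beta> \<alpha> * mon \<alpha> l)) \<and> (\<forall>\<alpha>. max 1 (deg \<beta>) < deg \<alpha> \<longrightarrow> eL \<beta> \<alpha> = 0)"
    if "\<beta> \<in> Ad d" for \<beta> unfolding eL_def by (rule someI_ex[OF exL[OF that]])
  have exN: "\<exists>e. (\<forall>l. Np \<beta> \<gamma> l = (\<Sum>\<alpha>\<in>Ad D. e \<alpha> * mon \<alpha> l)) \<and> (\<forall>\<alpha>. (deg \<beta> - 1) + (deg \<gamma> - 1) < deg \<alpha> \<longrightarrow> e \<alpha> = 0)"
    if "\<beta> \<in> Ad d" "\<gamma> \<in> Ad d" for \<beta> \<gamma>
    using that by (intro rep_D Npoly) (auto simp: D_def Ad_def)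
  define eN where "eN \<beta> \<gamma> = (SOME e. (\<forall>l. Np \<beta> \<gamma> l = (\<Sum>\<alpha>\<in>Ad D. e \<alpha> * mon \<alpha> l)) \<and> (\<forall>\<alpha>. (deg \<beta> - 1) + (deg \<gamma> - 1) < deg \<alpha> \<longrightarrow> e \<alpha> = 0))" for \<beta> \<gamma>
  have eNh: "(\<forall>l. Np \<beta> \<gamma> l = (\<Sum>\<alpha>\<in>Ad D. eN \<beta> \<gamma> \<alpha> * mon \<alpha> l)) \<and> (\<forall>\<alpha>. (deg \<beta> - 1) + (deg \<gamma> - 1) < deg \<alpha> \<longrightarrow> eN \<beta> \<gamma> \<alpha> = 0)"
    if "\<beta> \<in> Ad d" "\<gamma> \<in> Ad d" for \<beta> \<gamma> unfolding eN_def by (rule someI_ex[OF exN[OF that]])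
  obtain eK where eKh: "\<forall>l. Kp l = (\<Sum>\<alpha>\<in>Ad D. eK \<alpha> * mon \<alpha> l)" "\<forall>\<alpha>. 2 < deg \<alpha> \<longrightarrow> eK \<alpha> = 0"
    using rep_D[OF Kpoly, of D] by (auto simp: D_def)
  define X where "X \<alpha> t = (if \<alpha> \<in> Ad d then cd \<alpha> t else 0) + (\<Sum>\<beta>\<in>Ad d. c \<beta> t * eL \<beta> \<alpha>) + eK \<alpha>
     - (1/2) * (\<Sum>\<beta>\<in>Ad d. \<Sum>\<gamma>\<in>Ad d. (c \<beta> t * c \<gamma> t) * eN \<beta> \<gamma> \<alpha>)" for \<alpha> t
  have comb: "(\<Sum>\<alpha>\<in>Ad D. X \<alpha> t * mon \<alpha> l) = 0" if "t \<in> T" for t l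
  proof -
    have s1: "(\<Sum>\<alpha>\<in>Ad D. (if \<alpha> \<in> Ad d then cd \<alpha> t else 0) * mon \<alpha> l) = (\<Sum>\<beta>\<in>Ad d. cd \<beta> t * mon \<beta> l)"
      using ext_rep[where p="\<lambda>l. \<Sum>\<beta>\<in>Ad d. cd \<beta> t * mon \<beta> l" and k=d and c="\<lambda>\<beta>. cd \<beta> t" and D=D] by (simp add: D_def)
    have s2: "(\<Sum>\<alpha>\<in>Ad D. (\<Sum>\<beta>\<in>Ad d. c \<beta> t * eL \<beta> \<alpha>) * mon \<alpha> l) = (\<Sum>\<beta>\<in>Ad d. c \<beta> t * Lp \<beta> l)"
    proof -
      have "(\<Sum>\<alpha>\<in>Ad D. (\<Sum>\<beta>\<in>Ad d. c \<beta> t * eL \<beta> \<alpha>) * mon \<alpha> l)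
          = (\<Sum>\<alpha>\<in>Ad D. \<Sum>\<beta>\<in>Ad d. c \<beta> t * (eL \<beta> \<alpha> * mon \<alpha> l))"
        by (simp add: sum_distrib_right sum_distrib_left mult_ac)
      also have "\<dots> = (\<Sum>\<beta>\<in>Ad d. \<Sum>\<alpha>\<in>Ad D. c \<beta> t * (eL \<beta> \<alpha> * mon \<alpha> l))" by (rule sum.swap)
      also have "\<dots> = (\<Sum>\<beta>\<in>Ad d. c \<beta> t * Lp \<beta> l)"
        using eLh by (intro sum.cong) (auto simp: sum_distrib_left)
      finally show ?thesis .
    qed
    have s3: "(\<Sum>\<alpha>\<in>Ad D. eK \<alpha> * mon \<alpha> l) = Kp l" using eKh by simp
    have s4: "(\<Sum>\<alpha>\<in>Ad D. (\<Sum>\<beta>\<in>Ad d. \<Sum>\<gamma>\<in>Ad d. (c \<beta> t * c \<gamma> t) * eN \<beta> \<gamma> \<alpha>) * mon \<alpha> l)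
        = (\<Sum>\<beta>\<in>Ad d. \<Sum>\<gamma>\<in>Ad d. (c \<beta> t * c \<gamma> t) * Np \<beta> \<gamma> l)"
    proof -
      have "(\<Sum>\<alpha>\<in>Ad D. (\<Sum>\<beta>\<in>Ad d. \<Sum>\<gamma>\<in>Ad d. (c \<beta> t * c \<gamma> t) * eN \<beta> \<gamma> \<alpha>) * mon \<alpha> l)
          = (\<Sum>\<alpha>\<in>Ad D. \<Sum>\<beta>\<in>Ad d. \<Sum>\<gamma>\<in>Ad d. (c \<beta> t * c \<gamma> t) * (eN \<beta> \<gamma> \<alpha> * mon \<alpha> l))"
        by (simp add: sum_distrib_right sum_distrib_left mult_ac)
      also have "\<dots> = (\<Sum>\<beta>\<in>Ad d. \<Sum>\<alpha>\<in>Ad D. \<Sum>\<gamma>\<in>Ad d. (c \<beta> t * c \<gamma> t) * (eN \<beta> \<gamma> \<alpha> * mon \<alpha> l))"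
        by (rule sum.swap)
      also have "\<dots> = (\<Sum>\<beta>\<in>Ad d. \<Sum>\<gamma>\<in>Ad d. \<Sum>\<alpha>\<in>Ad D. (c \<beta> t * c \<gamma> t) * (eN \<beta> \<gamma> \<alpha> * mon \<alpha> l))"
        by (rule sum.cong[OF refl], rule sum.swap)
      also have "\<dots> = (\<Sum>\<beta>\<in>Ad d. \<Sum>\<gamma>\<in>Ad d. (c \<beta> t * c \<gamma> t) * Np \<beta> \<gamma> l)"
        using eNh by (intro sum.cong refl) (auto simp: sum_distrib_left)
      finally show ?thesis .
    qed
    have "(\<Sum>\<alpha>\<in>Ad D. X \<alpha> t * mon \<alpha> l)
       = (\<Sum>\<alpha>\<in>Ad D. (if \<alpha> \<in> Ad d then cd \<alpha> t else 0) * mon \<alpha> l)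
         + (\<Sum>\<alpha>\<in>Ad D. (\<Sum>\<beta>\<in>Ad d. c \<beta> t * eL \<beta> \<alpha>) * mon \<alpha> l)
         + (\<Sum>\<alpha>\<in>Ad D. eK \<alpha> * mon \<alpha> l)
         - (1/2) * (\<Sum>\<alpha>\<in>Ad D. (\<Sum>\<beta>\<in>Ad d. \<Sum>\<gamma>\<in>Ad d. (c \<beta> t * c \<gamma> t) * eN \<beta> \<gamma> \<alpha>) * mon \<alpha> l)"
      unfolding X_def by (simp add: algebra_simps sum.distrib sum_subtractf sum_distrib_left)
    also have "\<dots> = 0" unfolding s1 s2 s3 s4 using ident[OF that, of l] by simp
    finally show ?thesis .
  qed
  have Xz: "X \<alpha> t = 0" if "\<alpha> \<in> Ad D" "t \<in> T" for \<alpha> t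
    using uniq0[OF finite_Ad, of "\<lambda>\<alpha>. X \<alpha> t" D] comb[OF that(2)] that(1) by blast
  have adsub: "Ad d \<subseteq> Ad D" by (auto simp: Ad_def D_def)
  have cdE: "cd \<alpha> t = - (\<Sum>\<beta>\<in>Ad d. c \<beta> t * eL \<beta> \<alpha>)
      + (1/2) * (\<Sum>\<beta>\<in>Ad d. \<Sum>\<gamma>\<in>Ad d. (c \<beta> t * c \<gamma> t) * eN \<beta> \<gamma> \<alpha>)"
    if "\<alpha> \<in> Ad d" "3 \<le> deg \<alpha>" "t \<in> T" for \<alpha> t
  proof -
    have "eK \<alpha> = 0" using eKh(2) that(2) by auto
    then show ?thesis using Xz[of \<alpha> t] that adsub unfolding X_def by auto
  qed
  have eL0: "eL \<beta> \<alpha> = 0" if "\<beta> \<in> Ad d" "deg \<beta> \<le> 2" "3 \<le> deg \<alpha>" for \<alpha> \<beta>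
    using eLh[OF that(1)] that by auto
  have eN0: "eN \<beta> \<gamma> \<alpha> = 0" if "\<beta> \<in> Ad d" "\<gamma> \<in> Ad d" "deg \<beta> \<le> 2" "deg \<gamma> \<le> 2" "3 \<le> deg \<alpha>" for \<alpha> \<beta> \<gamma>
    using eNh[OF that(1,2)] that by auto
  have contc: "continuous_on T (c \<beta>)" if "\<beta> \<in> Ad d" for \<beta>
    using cdh[OF that] DERIV_continuous continuous_on_eq_continuous_within by blast
  have "\<forall>\<beta>\<in>Ad d. \<exists>B\<ge>0. \<forall>t\<in>T. \<bar>c \<beta> t\<bar> \<le> B"
  proof
    fix \<beta> :: "'n \<Rightarrow> nat" assume b: "\<beta> \<in> Ad d"
    have "compact T" unfolding T_def by simp
    from continuous_on_compact_bound[OF this contc[OF b]] obtain B where "B \<ge> 0" "\<And>t. t \<in> T \<Longrightarrow> norm (c \<beta> t) \<le> B"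
      by blast
    then show "\<exists>B\<ge>0. \<forall>t\<in>T. \<bar>c \<beta> t\<bar> \<le> B" by auto
  qed
  then obtain Bf where Bf: "\<And>\<beta>. \<beta> \<in> Ad d \<Longrightarrow> Bf \<beta> \<ge> 0 \<and> (\<forall>t\<in>T. \<bar>c \<beta> t\<bar> \<le> Bf \<beta>)"
    by metis
  define Cb where "Cb = (\<Sum>\<beta>\<in>Ad d. Bf \<beta>)"
  have Cb: "\<bar>c \<beta> t\<bar> \<le> Cb" if "\<beta> \<in> Ad d" "t \<in> T" for \<beta> t
  proof -
    have "Bf \<beta> \<le> Cb" unfolding Cb_def using Bf that(1) by (intro member_le_sum finite_Ad) auto
    then show ?thesis using Bf[OF that(1)] that(2) by force
  qed
  have Cb0: "Cb \<ge> 0" unfolding Cb_def using Bf by (intro sum_nonneg) auto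
  define Ml where "Ml = (\<Sum>\<alpha>\<in>Ad d. \<Sum>\<beta>\<in>Ad d. \<bar>eL \<beta> \<alpha>\<bar>)"
  define Mn where "Mn = (\<Sum>\<alpha>\<in>Ad d. \<Sum>\<beta>\<in>Ad d. \<Sum>\<gamma>\<in>Ad d. \<bar>eN \<beta> \<gamma> \<alpha>\<bar>)"
  have Ml: "\<bar>eL \<beta> \<alpha>\<bar> \<le> Ml" if "\<alpha> \<in> Ad d" "\<beta> \<in> Ad d" for \<alpha> \<beta>
  proof -
    have "\<bar>eL \<beta> \<alpha>\<bar> \<le> (\<Sum>\<beta>\<in>Ad d. \<bar>eL \<beta> \<alpha>\<bar>)" using that by (intro member_le_sum finite_Ad) auto
    also have "\<dots> \<le> Ml" unfolding Ml_def using that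
      by (intro member_le_sum[of _ _ "\<lambda>\<alpha>. \<Sum>\<beta>\<in>Ad d. \<bar>eL \<beta> \<alpha>\<bar>"] finite_Ad sum_nonneg) auto
    finally show ?thesis .
  qed
  have Mn: "\<bar>eN \<beta> \<gamma> \<alpha>\<bar> \<le> Mn" if "\<alpha> \<in> Ad d" "\<beta> \<in> Ad d" "\<gamma> \<in> Ad d" for \<alpha> \<beta> \<gamma>
  proof -
    have "\<bar>eN \<beta> \<gamma> \<alpha>\<bar> \<le> (\<Sum>\<gamma>\<in>Ad d. \<bar>eN \<beta> \<gamma> \<alpha>\<bar>)" using that by (intro member_le_sum finite_Ad) auto
    also have "\<dots> \<le> (\<Sum>\<beta>\<in>Ad d. \<Sum>\<gamma>\<in>Ad d. \<bar>eN \<beta> \<gamma> \<alpha>\<bar>)" using that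
      by (intro member_le_sum[of _ _ "\<lambda>\<beta>. \<Sum>\<gamma>\<in>Ad d. \<bar>eN \<beta> \<gamma> \<alpha>\<bar>"] finite_Ad sum_nonneg) auto
    also have "\<dots> \<le> Mn" unfolding Mn_def using that
      by (intro member_le_sum[of _ _ "\<lambda>\<alpha>. \<Sum>\<beta>\<in>Ad d. \<Sum>\<gamma>\<in>Ad d. \<bar>eN \<beta> \<gamma> \<alpha>\<bar>"] finite_Ad sum_nonneg) auto
    finally show ?thesis .
  qed
  have Ml0: "Ml \<ge> 0" unfolding Ml_def by (intro sum_nonneg) auto
  have Mn0: "Mn \<ge> 0" unfolding Mn_def by (intro sum_nonneg) auto
  define N where "N = real (card (Ad d :: ('n \<Rightarrow> nat) set))"
  have N0: "N \<ge> 0" by (simp add: N_def)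
  define h where "h \<beta> t = (if 3 \<le> deg \<beta> then \<bar>c \<beta> t\<bar> else 0)" for \<beta> t
  define Sh where "Sh t = (\<Sum>\<beta>\<in>Ad d. h \<beta> t)" for t
  have h0: "h \<beta> t \<ge> 0" for \<beta> t by (simp add: h_def)
  define C0 where "C0 = Ml + N * Cb * Mn"
  have C00: "C0 \<ge> 0" unfolding C0_def using Ml0 N0 Cb0 Mn0 by simp
  have cdb: "\<bar>cd \<alpha> t\<bar> \<le> C0 * Sh t" if "\<alpha> \<in> Ad d" "3 \<le> deg \<alpha>" "t \<in> T" for \<alpha> t
  proof -
    have b1: "\<bar>\<Sum>\<beta>\<in>Ad d. c \<beta> t * eL \<beta> \<alpha>\<bar> \<le> Ml * Sh t"
    proof -
      have "\<bar>\<Sum>\<beta>\<in>Ad d. c \<beta> t * eL \<beta> \<alpha>\<bar> \<le> (\<Sum>\<beta>\<in>Ad d. \<bar>c \<beta> t * eL \<beta> \<alpha>\<bar>)" by (rule sum_abs)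
      also have "\<dots> \<le> (\<Sum>\<beta>\<in>Ad d. Ml * h \<beta> t)"
      proof (intro sum_mono)
        fix \<beta> :: "'n \<Rightarrow> nat" assume b: "\<beta> \<in> Ad d"
        show "\<bar>c \<beta> t * eL \<beta> \<alpha>\<bar> \<le> Ml * h \<beta> t"
        proof (cases "3 \<le> deg \<beta>")
          case True
          then have "\<bar>c \<beta> t * eL \<beta> \<alpha>\<bar> = h \<beta> t * \<bar>eL \<beta> \<alpha>\<bar>" by (simp add: h_def abs_mult)
          also have "\<dots> \<le> h \<beta> t * Ml" using Ml[OF that(1) b] h0 by (intro mult_left_mono) auto
          finally show ?thesis by (simp add: mult.commute)
        next
          case False
          then show ?thesis using eL0[OF b _ that(2)] Ml0 h0[of \<beta> t] by simp
        qed
      qed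
      also have "\<dots> = Ml * Sh t" by (simp add: Sh_def sum_distrib_left)
      finally show ?thesis .
    qed
    have b2: "\<bar>\<Sum>\<beta>\<in>Ad d. \<Sum>\<gamma>\<in>Ad d. (c \<beta> t * c \<gamma> t) * eN \<beta> \<gamma> \<alpha>\<bar> \<le> 2 * N * Cb * Mn * Sh t"
    proof -
      have "\<bar>\<Sum>\<beta>\<in>Ad d. \<Sum>\<gamma>\<in>Ad d. (c \<beta> t * c \<gamma> t) * eN \<beta> \<gamma> \<alpha>\<bar>
          \<le> (\<Sum>\<beta>\<in>Ad d. \<bar>\<Sum>\<gamma>\<in>Ad d. (c \<beta> t * c \<gamma> t) * eN \<beta> \<gamma> \<alpha>\<bar>)" by (rule sum_abs)
      also have "\<dots> \<le> (\<Sum>\<beta>\<in>Ad d. \<Sum>\<gamma>\<in>Ad d. \<bar>(c \<beta> t * c \<gamma> t) * eN \<beta> \<gamma> \<alpha>\<bar>)"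
        by (intro sum_mono sum_abs)
      also have "\<dots> \<le> (\<Sum>\<beta>\<in>Ad d. \<Sum>\<gamma>\<in>Ad d. Cb * Mn * (h \<beta> t + h \<gamma> t))"
      proof (intro sum_mono)
        fix \<beta> \<gamma> :: "'n \<Rightarrow> nat" assume b: "\<beta> \<in> Ad d" and g: "\<gamma> \<in> Ad d"
        have cb: "\<bar>c \<beta> t\<bar> \<le> Cb" "\<bar>c \<gamma> t\<bar> \<le> Cb" using Cb b g that(3) by auto
        have en: "\<bar>eN \<beta> \<gamma> \<alpha>\<bar> \<le> Mn" using Mn that(1) b g by auto
        show "\<bar>(c \<beta> t * c \<gamma> t) * eN \<beta> \<gamma> \<alpha>\<bar> \<le> Cb * Mn * (h \<beta> t + h \<gamma> t)"
        proof (cases "3 \<le> deg \<beta>")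
          case True
          have "\<bar>(c \<beta> t * c \<gamma> t) * eN \<beta> \<gamma> \<alpha>\<bar> = h \<beta> t * (\<bar>c \<gamma> t\<bar> * \<bar>eN \<beta> \<gamma> \<alpha>\<bar>)"
            using True by (simp add: h_def abs_mult)
          also have "\<dots> \<le> h \<beta> t * (Cb * Mn)" using cb en h0[of \<beta> t] by (intro mult_left_mono mult_mono) auto
          also have "\<dots> \<le> Cb * Mn * (h \<beta> t + h \<gamma> t)" using h0[of \<gamma> t] Cb0 Mn0 by (simp add: algebra_simps)
          finally show ?thesis .
        next
          case F1: False
          show ?thesis
          proof (cases "3 \<le> deg \<gamma>")
            case True
            have "\<bar>(c \<beta> t * c \<gamma> t) * eN \<beta> \<gamma> \<alpha>\<bar> = h \<gamma> t * (\<bar>c \<beta> t\<bar> * \<bar>eN \<beta> \<gamma> \<alpha>\<bar>)"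
              using True by (simp add: h_def abs_mult)
            also have "\<dots> \<le> h \<gamma> t * (Cb * Mn)" using cb en h0[of \<gamma> t] by (intro mult_left_mono mult_mono) auto
            also have "\<dots> \<le> Cb * Mn * (h \<beta> t + h \<gamma> t)" using h0[of \<beta> t] Cb0 Mn0 by (simp add: algebra_simps)
            finally show ?thesis .
          next
            case False
            then have "eN \<beta> \<gamma> \<alpha> = 0" using eN0[OF b g _ _ that(2)] F1 by simp
            then show ?thesis using h0[of \<beta> t] h0[of \<gamma> t] Cb0 Mn0 by simp
          qed
        qed
      qed
      also have "\<dots> = 2 * N * Cb * Mn * Sh t"
        by (simp add: sum.distrib sum_distrib_left[symmetric] Sh_def N_def algebra_simps)
           (metis sum_distrib_right mult.commute)
      finally show ?thesis .
    qed
    have "\<bar>cd \<alpha> t\<bar> \<le> \<bar>\<Sum>\<beta>\<in>Ad d. c \<beta> t * eL \<beta> \<alpha>\<bar>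
        + (1/2) * \<bar>\<Sum>\<beta>\<in>Ad d. \<Sum>\<gamma>\<in>Ad d. (c \<beta> t * c \<gamma> t) * eN \<beta> \<gamma> \<alpha>\<bar>"
      unfolding cdE[OF that] by (simp add: abs_mult)
    also have "\<dots> \<le> Ml * Sh t + (1/2) * (2 * N * Cb * Mn * Sh t)" using b1 b2 by simp
    also have "\<dots> = C0 * Sh t" by (simp add: C0_def algebra_simps)
    finally show ?thesis .
  qed
  have ctf: "c \<beta> tf = 0" if "\<beta> \<in> Ad d" "3 \<le> deg \<beta>" for \<beta>
  proof -
    have "polyk (1 + 1) (\<lambda>l. l \<bullet> (F *v l))"
      by (rule polyk_inner[of 1 "\<lambda>l. l" 1 "\<lambda>l. F *v l", OF polyk_coord polyk_matvec[OF polyk_coord]])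
    then have "polyk 2 (\<lambda>l. l \<bullet> (F *v l))" by (simp add: numeral_2_eq_2)
    from polyk_cmult[OF this, of "-(1/2)"] have "polyk 2 (\<lambda>l. J l tf)" using terminal by simp
    from rep_D[OF this, of "d + 2"] obtain e where e: "\<forall>l. J l tf = (\<Sum>\<alpha>\<in>Ad (d+2). e \<alpha> * mon \<alpha> l)"
      "\<forall>\<alpha>. 2 < deg \<alpha> \<longrightarrow> e \<alpha> = 0" by auto
    have r: "\<forall>l. J l tf = (\<Sum>\<alpha>\<in>Ad d. c \<alpha> tf * mon \<alpha> l)" using rep' tfT by auto
    have "\<forall>l. J l tf = (\<Sum>\<alpha>\<in>Ad (d+2). (if \<alpha> \<in> Ad d then c \<alpha> tf else 0) * mon \<alpha> l)"
      by (rule ext_rep[OF r]) simp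
    with e(1) have "\<forall>\<alpha>\<in>Ad (d+2). (if \<alpha> \<in> Ad d then c \<alpha> tf else 0) = e \<alpha>"
      by (intro uniq finite_Ad) auto
    moreover have "\<beta> \<in> Ad (d+2)" using that by (auto simp: Ad_def)
    ultimately show ?thesis using e(2) that by force
  qed
  define y where "y t = (\<Sum>\<beta>\<in>Ad d. if 3 \<le> deg \<beta> then (c \<beta> t)^2 else 0)" for t
  define y' where "y' t = (\<Sum>\<beta>\<in>Ad d. if 3 \<le> deg \<beta> then 2 * c \<beta> t * cd \<beta> t else 0)" for t
  have dy: "(y has_real_derivative y' t) (at t within T)" if "t \<in> T" for t
    unfolding y_def y'_def
  proof (intro DERIV_sum)
    fix \<beta> :: "'n \<Rightarrow> nat" assume b: "\<beta> \<in> Ad d"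
    show "((\<lambda>s. if 3 \<le> deg \<beta> then (c \<beta> s)^2 else 0) has_real_derivative
        (if 3 \<le> deg \<beta> then 2 * c \<beta> t * cd \<beta> t else 0)) (at t within T)"
    proof (cases "3 \<le> deg \<beta>")
      case True
      then show ?thesis using DERIV_power[OF cdh[OF b that], of 2] by (simp add: mult_ac)
    next
      case False
      then show ?thesis by simp
    qed
  qed
  define K where "K = 2 * C0 * N"
  have Sh0: "Sh t \<ge> 0" for t unfolding Sh_def using h0 by (intro sum_nonneg) auto
  have ineq: "y' t \<ge> - K * y t" if "t \<in> T" for t
  proof -
    have a1: "\<bar>y' t\<bar> \<le> 2 * C0 * (Sh t)^2"
    proof -
      have "\<bar>y' t\<bar> \<le> (\<Sum>\<beta>\<in>Ad d. \<bar>if 3 \<le> deg \<beta> then 2 * c \<beta> t * cd \<beta> t else 0\<bar>)"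
        unfolding y'_def by (rule sum_abs)
      also have "\<dots> \<le> (\<Sum>\<beta>\<in>Ad d. 2 * C0 * Sh t * h \<beta> t)"
      proof (intro sum_mono)
        fix \<beta> :: "'n \<Rightarrow> nat" assume b: "\<beta> \<in> Ad d"
        show "\<bar>if 3 \<le> deg \<beta> then 2 * c \<beta> t * cd \<beta> t else 0\<bar> \<le> 2 * C0 * Sh t * h \<beta> t"
        proof (cases "3 \<le> deg \<beta>")
          case True
          have "\<bar>2 * c \<beta> t * cd \<beta> t\<bar> = 2 * h \<beta> t * \<bar>cd \<beta> t\<bar>" using True by (simp add: h_def abs_mult)
          also have "\<dots> \<le> 2 * h \<beta> t * (C0 * Sh t)" using cdb[OF b True that] h0[of \<beta> t]
            by (intro mult_left_mono) auto
          finally show ?thesis using True by (simp add: mult_ac)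
        next
          case False
          then show ?thesis using C00 Sh0[of t] h0[of \<beta> t] by simp
        qed
      qed
      also have "\<dots> = 2 * C0 * (Sh t)^2" by (simp add: Sh_def sum_distrib_left power2_eq_square mult_ac)
      finally show ?thesis .
    qed
    have a2: "(Sh t)^2 \<le> N * y t"
    proof -
      have "(Sh t)^2 \<le> N * (\<Sum>\<beta>\<in>Ad d. (h \<beta> t)^2)" unfolding Sh_def N_def by (rule cs_sum[OF finite_Ad])
      also have "(\<Sum>\<beta>\<in>Ad d. (h \<beta> t)^2) = y t" unfolding y_def h_def by (intro sum.cong) auto
      finally show ?thesis .
    qed
    have "2 * C0 * (Sh t)^2 \<le> 2 * C0 * (N * y t)" using a2 C00 by (intro mult_left_mono) auto
    then show ?thesis using a1 by (simp add: K_def mult_ac)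
  qed
  have ynn: "y t \<ge> 0" for t unfolding y_def by (intro sum_nonneg) auto
  have yb: "y tf = 0" unfolding y_def using ctf by (intro sum.neutral) auto
  have y0: "y t = 0" if "t \<in> T" for t
    using gronwall0[of t0 tf y y' K, OF _ _ _ _ yb] dy ineq ynn times that unfolding T_def by auto
  show ?thesis
  proof (intro ballI impI)
    fix t and \<alpha> :: "'n \<Rightarrow> nat" assume t: "t \<in> {t0..tf}" and a: "\<alpha> \<in> Ad d" and d3: "3 \<le> deg \<alpha>"
    have "\<forall>\<beta>\<in>Ad d. (if 3 \<le> deg \<beta> then (c \<beta> t)^2 else 0) = 0"
      using y0[of t] t sum_nonneg_eq_0_iff[OF finite_Ad[of d], where f="\<lambda>\<beta>. if 3 \<le> deg \<beta> then (c \<beta> t)^2 else 0"]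
      unfolding y_def T_def by auto
    then show "c \<alpha> t = 0" using a d3 by auto
  qed
qed




lemma inner_mat_T: "(x::real^'n) \<bullet> ((A::real^'n^'n) *v y) = (transpose A *v x) \<bullet> y"
  by (metis dot_lmul_matrix transpose_matrix_vector)

lemma inner_mat_sym: "transpose (A::real^'n^'n) = A \<Longrightarrow> (x::real^'n) \<bullet> (A *v y) = y \<bullet> (A *v x)"
  by (metis inner_mat_T inner_commute)

lemma sum_ind2: fixes f :: "'n::finite \<Rightarrow> real" shows "(\<Sum>j\<in>UNIV. (if i = j then k else 0) * f j) = (k::real) * f i"
proof -
  have "(\<Sum>j\<in>UNIV. (if i = j then k else 0) * f j) = (\<Sum>j\<in>UNIV. if j = i then k * f j else 0)"
    by (rule sum.cong) auto
  then show ?thesis by (simp add: sum.delta sum.delta')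
qed

lemma sum_ind3: fixes f :: "'n::finite \<Rightarrow> real" shows "(\<Sum>j\<in>UNIV. f j * (if j = i then k else 0)) = f i * (k::real)"
proof -
  have "(\<Sum>j\<in>UNIV. f j * (if j = i then k else 0)) = (\<Sum>j\<in>UNIV. if j = i then f j * k else 0)"
    by (rule sum.cong) auto
  then show ?thesis by (simp add: sum.delta sum.delta')
qed

lemma mat_axis_entry: "((A::real^'n^'n) *v axis j 1) $ i = A $ i $ j"
proof -
  have "(\<Sum>k\<in>UNIV. A $ i $ k * (if k = j then 1 else 0)) = A $ i $ j" by (rule sum_ind3[where k=1, simplified])
  then show ?thesis by (simp add: matrix_vector_mult_def axis_def)
qed

lemma axis_mat_axis: "axis i (1::real) \<bullet> ((A::real^'n^'n) *v axis j 1) = A $ i $ j"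
  by (simp add: inner_axis' mat_axis_entry)

lemma qextract:
  fixes X :: "real^'n^'n"
  assumes h: "\<forall>l. \<kappa> + a \<bullet> l + l \<bullet> (X *v l) = 0"
  shows "a = 0" "\<forall>i j. X $ i $ j + X $ j $ i = 0"
proof -
  have k: "\<kappa> = 0" using h[rule_format, of 0] by simp
  have p: "a $ i + X $ i $ i = 0" for i
    using h[rule_format, of "axis i 1"] k by (simp add: inner_axis' mat_axis_entry inner_axis)
  have m: "- a $ i + X $ i $ i = 0" for i
  proof -
    have "(- axis i 1) \<bullet> (X *v (- axis i 1)) = X $ i $ i"
    proof -
      have "X *v (- axis i 1) = - (X *v axis i 1)" by (simp add: vec_eq_iff matrix_vector_mult_def sum_negf)
      then show ?thesis by (simp add: axis_mat_axis)
    qed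
    then show ?thesis using h[rule_format, of "- axis i 1"] k by (simp add: inner_axis' inner_axis)
  qed
  have ai: "a $ i = 0" and xi: "X $ i $ i = 0" for i using p[of i] m[of i] by auto
  show "a = 0" using ai by (simp add: vec_eq_iff)
  show "\<forall>i j. X $ i $ j + X $ j $ i = 0"
  proof (intro allI)
    fix i j
    have "(axis i 1 + axis j 1) \<bullet> (X *v (axis i 1 + axis j 1)) = X $ i $ i + X $ i $ j + X $ j $ i + X $ j $ j"
      by (simp add: matrix_vector_right_distrib inner_add_left inner_add_right axis_mat_axis)
    moreover have "a \<bullet> (axis i 1 + axis j 1) = 0" using ai by (simp add: inner_add_right inner_axis)
    ultimately show "X $ i $ j + X $ j $ i = 0"
      using h[rule_format, of "axis i 1 + axis j 1"] k xi[of i] xi[of j] by simp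
  qed
qed

lemma quad_normal:
  fixes q :: "real^'n \<Rightarrow> real" and M :: "real^'n^'n"
  assumes h: "\<forall>l. q l = a + b \<bullet> l + l \<bullet> (M *v l)"
  defines "Hq \<equiv> (\<chi> i j. q (axis i 1 + axis j 1) - q (axis i 1) - q (axis j 1) + q 0)"
  shows "Hq = M + transpose M"
    and "\<forall>l. q l = q 0 + (\<chi> i. q (axis i 1) - q 0 - (1/2) * Hq $ i $ i) \<bullet> l + (1/2) * (l \<bullet> (Hq *v l))"
proof -
  have hq: "Hq $ i $ j = M $ i $ j + M $ j $ i" for i j
  proof -
    have "(axis i 1 + axis j 1) \<bullet> (M *v (axis i 1 + axis j 1)) = M $ i $ i + M $ i $ j + M $ j $ i + M $ j $ j"
      by (simp add: matrix_vector_right_distrib inner_add_left inner_add_right axis_mat_axis)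
    then show ?thesis unfolding Hq_def using h
      by (simp add: inner_add_right axis_mat_axis)
  qed
  show H: "Hq = M + transpose M" using hq by (simp add: vec_eq_iff transpose_def)
  have q0: "q 0 = a" using h by simp
  have gi: "q (axis i 1) - q 0 - (1/2) * Hq $ i $ i = b $ i" for i
    using h hq[of i i] by (simp add: inner_axis axis_mat_axis)
  have lt: "l \<bullet> (l v* M) = l \<bullet> (M *v l)" for l
  proof -
    have "l \<bullet> (l v* M) = (l v* M) \<bullet> l" by (rule inner_commute)
    also have "\<dots> = l \<bullet> (M *v l)" by (rule dot_lmul_matrix)
    finally show ?thesis .
  qed
  show "\<forall>l. q l = q 0 + (\<chi> i. q (axis i 1) - q 0 - (1/2) * Hq $ i $ i) \<bullet> l + (1/2) * (l \<bullet> (Hq *v l))"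
  proof
    fix l
    have "(\<chi> i. q (axis i 1) - q 0 - (1/2) * Hq $ i $ i) = b" using gi by (simp add: vec_eq_iff)
    moreover have "l \<bullet> (Hq *v l) = 2 * (l \<bullet> (M *v l))"
      unfolding H by (simp add: matrix_vector_mult_add_rdistrib inner_add_right lt)
    ultimately show "q l = q 0 + (\<chi> i. q (axis i 1) - q 0 - (1/2) * Hq $ i $ i) \<bullet> l + (1/2) * (l \<bullet> (Hq *v l))"
      using h q0 by simp
  qed
qed

lemma bl_quadform: "bounded_linear (\<lambda>M::real^'n^'n. (l::real^'n) \<bullet> (M *v l))"
proof -
  have "linear (\<lambda>M::real^'n^'n. l \<bullet> (M *v l))"
    by (rule linearI) (simp_all add: matrix_vector_mult_add_rdistrib inner_add_right smat_vec)
  then show ?thesis by (simp add: linear_conv_bounded_linear)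
qed

lemma bl_matvec: "bounded_linear (\<lambda>x::real^'n. (M::real^'n^'n) *v x)"
  using matrix_vector_mul_linear linear_conv_bounded_linear by blast

lemma transpose_entry: "transpose A $ i $ j = A $ j $ i"
  by (simp add: transpose_def)

lemma mat_mul_left: "mat k ** (A::real^'n^'n) = k *\<^sub>R A"
  by (simp add: vec_eq_iff matrix_matrix_mult_def mat_def sum_ind2)

lemma mat_mul_right: "(A::real^'n^'n) ** mat k = k *\<^sub>R A"
  by (simp add: vec_eq_iff matrix_matrix_mult_def mat_def sum_ind3 mult.commute)

lemma mat_vec: "mat k *v (x::real^'n) = k *\<^sub>R x"
  by (simp add: vec_eq_iff matrix_vector_mult_def mat_def sum_ind2)

lemma matrix_inv_sym:
  assumes "transpose S = S" "invertible (S::real^'n^'n)"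
  shows "transpose (matrix_inv S) = matrix_inv S"
proof -
  have i: "S ** matrix_inv S = mat 1" "matrix_inv S ** S = mat 1"
    using assms(2) unfolding invertible_def matrix_inv_def by (metis (mono_tags, lifting) someI_ex)+
  have "transpose (matrix_inv S) ** S = mat 1"
    using arg_cong[OF i(1), of transpose] assms(1) by (simp add: matrix_transpose_mul)
  then have "transpose (matrix_inv S) = transpose (matrix_inv S) ** (S ** matrix_inv S)" 
    using i by simp
  also have "\<dots> = matrix_inv S" by (simp add: matrix_mul_assoc \<open>transpose (matrix_inv S) ** S = mat 1\<close>)
  finally show ?thesis .
qed

lemma diag_entry: "diag_vec (transpose B ** H ** B) $ i = col B i \<bullet> ((H::real^'n^'n) *v col B i)"
  by (simp add: diag_vec_def col_def matrix_matrix_mult_def matrix_vector_mult_def inner_vec_def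
      transpose_def sum_distrib_left sum_distrib_right mult_ac) (subst sum.swap, simp add: mult_ac)

lemma tB_entry: "(transpose B *v (w::real^'n)) $ i = col B i \<bullet> w"
  by (simp add: col_def matrix_vector_mult_def inner_vec_def transpose_def mult.commute)




lemma symswap: "transpose (A::real^'n^'n) = A \<Longrightarrow> (A *v x) \<bullet> y = (A *v y) \<bullet> x"
  by (metis inner_commute inner_mat_T)

lemma tT_inner: "(transpose (A::real^'n^'n) *v u) \<bullet> z = u \<bullet> (A *v z)"
  by (metis inner_mat_T)

lemma mv_scale: "(A::real^'n^'n) *v (c *\<^sub>R x) = c *\<^sub>R (A *v x)"
  by (simp add: vec_eq_iff matrix_vector_mult_def sum_distrib_left mult_ac)

lemma transpose_diff: "transpose ((A::real^'n^'n) - C) = transpose A - transpose C"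
  by (simp add: vec_eq_iff transpose_def)

lemma mm_diff_r: "((A::real^'n^'n) - C) ** D = A ** D - C ** D"
  by (simp add: vec_eq_iff matrix_matrix_mult_def sum_subtractf left_diff_distrib)

lemma mm_diff_l: "(D::real^'n^'n) ** (A - C) = D ** A - D ** C"
  by (simp add: vec_eq_iff matrix_matrix_mult_def sum_subtractf right_diff_distrib)

lemma stepB:
  fixes B Q Si F :: "real^'n^'n" and \<omega> t0 tf :: real and lam0 :: "real^'n"
    and J :: "real^'n \<Rightarrow> real \<Rightarrow> real"
  assumes times: "t0 < tf"
    and Q_sym: "transpose Q = Q" and F_sym: "transpose F = F" and Si_sym: "transpose Si = Si"
    and quad: "\<forall>t\<in>{t0..tf}. \<exists>a b (M::real^'n^'n). \<forall>l. J l t = a + b \<bullet> l + l \<bullet> (M *v l)"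
    and HJB: "\<forall>l. \<forall>t\<in>{t0..tf}. \<exists>Jt grad.
        ((\<lambda>s. J l s) has_real_derivative Jt) (at t within {t0..tf}) \<and>
        ((\<lambda>x. J x t) has_derivative (\<lambda>h. grad \<bullet> h)) (at l) \<and>
        0 = Jt + (\<omega> *\<^sub>R lam0 - \<omega> *\<^sub>R l) \<bullet> grad + l \<bullet> DeltaB B J l t
            - (1/2) * (l \<bullet> (Q *v l))
            - (1/2) * (DeltaB B J l t \<bullet> (Si *v DeltaB B J l t))"
    and terminal: "\<forall>l. J l tf = - (1/2) * (l \<bullet> (F *v l))"
  shows "\<exists>(f :: real \<Rightarrow> real) (g :: real \<Rightarrow> real^'n) (H :: real \<Rightarrow> real^'n^'n).
      H tf = - F \<and> g tf = 0 \<and>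
      (\<forall>t\<in>{t0..tf}. (H has_vector_derivative
          (transpose (mat \<omega> - B) ** H t + H t ** (mat \<omega> - B)
           + H t ** B ** Si ** transpose B ** H t + Q))
         (at t within {t0..tf})) \<and>
      (\<forall>t\<in>{t0..tf}. (g has_vector_derivative
          ((mat \<omega> - transpose B + H t ** B ** Si ** transpose B) *v g t
           - \<omega> *\<^sub>R (H t *v lam0)
           + (1/2) *\<^sub>R ((H t ** B ** Si - mat 1)
                         *v diag_vec (transpose B ** H t ** B))))
         (at t within {t0..tf})) \<and>
      (\<forall>l. \<forall>t\<in>{t0..tf}. J l t = f t + g t \<bullet> l + (1/2) * (l \<bullet> (H t *v l)))"
proof -
  define T where "T = {t0..tf}"
  define P where "P l t x g \<longleftrightarrow> ((\<lambda>s. J l s) has_real_derivative x) (at t within T) \<and>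
        ((\<lambda>y. J y t) has_derivative (\<lambda>h. g \<bullet> h)) (at l) \<and>
        0 = x + (\<omega> *\<^sub>R lam0 - \<omega> *\<^sub>R l) \<bullet> g + l \<bullet> DeltaB B J l t
            - (1/2) * (l \<bullet> (Q *v l))
            - (1/2) * (DeltaB B J l t \<bullet> (Si *v DeltaB B J l t))" for l t x g
  define Jt where "Jt l t = (SOME x. \<exists>g. P l t x g)" for l t
  define grad where "grad l t = (SOME g. P l t (Jt l t) g)" for l t
  have hP: "P l t (Jt l t) (grad l t)" if "t \<in> T" for l t
  proof -
    have "\<exists>x g. P l t x g" using HJB that unfolding P_def T_def by blast
    then have "\<exists>g. P l t (Jt l t) g" unfolding Jt_def by (rule someI_ex)
    then show ?thesis unfolding grad_def by (rule someI_ex)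
  qed
  have tfT: "tf \<in> T" using times by (simp add: T_def)
  have dJ: "((\<lambda>s. J l s) has_real_derivative Jt l t) (at t within T)" if "t \<in> T" for l t
    using hP[OF that] by (simp add: P_def)
  define e :: "'n \<Rightarrow> real^'n" where "e i = axis i 1" for i
  define Hf where "Hf t = (\<chi> i j. J (e i + e j) t - J (e i) t - J (e j) t + J 0 t)" for t
  define gf where "gf t = (\<chi> i. J (e i) t - J 0 t - (1/2) * Hf t $ i $ i)" for t
  define ff where "ff t = J 0 t" for t
  define Hd where "Hd t = (\<chi> i j. Jt (e i + e j) t - Jt (e i) t - Jt (e j) t + Jt 0 t)" for t
  define gd where "gd t = (\<chi> i. Jt (e i) t - Jt 0 t - (1/2) * Hd t $ i $ i)" for t
  have Jform: "J l t = ff t + gf t \<bullet> l + (1/2) * (l \<bullet> (Hf t *v l))" if tT: "t \<in> T" for l t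
  proof -
    obtain a b M where h: "\<forall>l. J l t = a + b \<bullet> l + l \<bullet> (M *v l)" using quad tT unfolding T_def by blast
    have "\<forall>l. J l t = J 0 t + (\<chi> i. J (axis i 1) t - J 0 t - (1/2) *
       (\<chi> i j. J (axis i 1 + axis j 1) t - J (axis i 1) t - J (axis j 1) t + J 0 t) $ i $ i) \<bullet> l
       + (1/2) * (l \<bullet> ((\<chi> i j. J (axis i 1 + axis j 1) t - J (axis i 1) t - J (axis j 1) t + J 0 t) *v l))"
      by (rule quad_normal(2)[OF h])
    then show ?thesis unfolding ff_def gf_def Hf_def e_def by blast
  qed
  have Hsym: "transpose (Hf t) = Hf t" for t
    by (simp add: vec_eq_iff transpose_def Hf_def add.commute)
  have Hdsym: "transpose (Hd t) = Hd t" for t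
    by (simp add: vec_eq_iff transpose_def Hd_def add.commute)
  have dHe: "((\<lambda>s. Hf s $ i $ j) has_real_derivative Hd t $ i $ j) (at t within T)" if "t \<in> T" for t i j
    unfolding Hf_def Hd_def by (simp, intro DERIV_add DERIV_diff dJ that)
  have dH: "(Hf has_vector_derivative Hd t) (at t within T)" if "t \<in> T" for t
    by (intro vec_has_vector_derivative) (simp add: dHe[OF that, unfolded has_real_derivative_iff_has_vector_derivative])
  have dg: "(gf has_vector_derivative gd t) (at t within T)" if "t \<in> T" for t
  proof (intro vec_has_vector_derivative)
    fix i
    have "((\<lambda>s. J (e i) s - J 0 s - (1/2) * Hf s $ i $ i) has_real_derivative
          Jt (e i) t - Jt 0 t - (1/2) * Hd t $ i $ i) (at t within T)"
      by (intro DERIV_diff DERIV_cmult dJ dHe that)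
    then show "((\<lambda>s. gf s $ i) has_vector_derivative gd t $ i) (at t within T)"
      by (simp add: gf_def gd_def has_real_derivative_iff_has_vector_derivative)
  qed
  have JtE: "Jt l t = Jt 0 t + gd t \<bullet> l + (1/2) * (l \<bullet> (Hd t *v l))" if "t \<in> T" for l t
  proof -
    have a: "((\<lambda>s. gf s \<bullet> l) has_vector_derivative gd t \<bullet> l) (at t within T)"
      by (rule bounded_linear.has_vector_derivative[OF bounded_linear_inner_left dg[OF that]])
    have b: "((\<lambda>s. l \<bullet> (Hf s *v l)) has_vector_derivative l \<bullet> (Hd t *v l)) (at t within T)"
      by (rule bounded_linear.has_vector_derivative[OF bl_quadform dH[OF that]])
    have "((\<lambda>s. ff s + gf s \<bullet> l + (1/2) * (l \<bullet> (Hf s *v l))) has_real_derivative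
        Jt 0 t + gd t \<bullet> l + (1/2) * (l \<bullet> (Hd t *v l))) (at t within T)"
      unfolding ff_def
      by (intro DERIV_add DERIV_cmult dJ that a[unfolded has_real_derivative_iff_has_vector_derivative[symmetric]]
          b[unfolded has_real_derivative_iff_has_vector_derivative[symmetric]])
    then have "((\<lambda>s. J l s) has_real_derivative Jt 0 t + gd t \<bullet> l + (1/2) * (l \<bullet> (Hd t *v l))) (at t within T)"
      by (rule has_field_derivative_transform_within[where d=1]) (use that Jform in auto)
    then show ?thesis using dJ[OF that] deriv_uniq_Icc[OF times] that unfolding T_def by metis
  qed
  have gradE: "(\<omega> *\<^sub>R lam0 - \<omega> *\<^sub>R l) \<bullet> grad l t = (\<omega> *\<^sub>R lam0 - \<omega> *\<^sub>R l) \<bullet> (gf t + Hf t *v l)"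
    if "t \<in> T" for l t
  proof -
    have "((\<lambda>x. ff t + gf t \<bullet> x + (1/2) * (x \<bullet> (Hf t *v x))) has_derivative
        (\<lambda>h. gf t \<bullet> h + (1/2) * (l \<bullet> (Hf t *v h) + h \<bullet> (Hf t *v l)))) (at l)"
      by (intro derivative_eq_intros has_derivative_inner bounded_linear_imp_has_derivative bl_matvec
          has_derivative_ident has_derivative_const) (auto intro: bounded_linear_imp_has_derivative[OF bl_matvec])
    moreover have "(\<lambda>h. gf t \<bullet> h + (1/2) * (l \<bullet> (Hf t *v h) + h \<bullet> (Hf t *v l))) = (\<lambda>h. (gf t + Hf t *v l) \<bullet> h)"
      using inner_mat_sym[OF Hsym] by (auto simp: fun_eq_iff inner_add_left inner_add_right inner_commute)
    moreover have "(\<lambda>x. J x t) = (\<lambda>x. ff t + gf t \<bullet> x + (1/2) * (x \<bullet> (Hf t *v x)))" using Jform that by auto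
    ultimately have "((\<lambda>x. J x t) has_derivative (\<lambda>h. (gf t + Hf t *v l) \<bullet> h)) (at l)" by simp
    moreover have "((\<lambda>x. J x t) has_derivative (\<lambda>h. grad l t \<bullet> h)) (at l)" using hP[OF that] by (simp add: P_def)
    ultimately have "(\<lambda>h. grad l t \<bullet> h) = (\<lambda>h. (gf t + Hf t *v l) \<bullet> h)"
      by (rule has_derivative_unique[rotated])
    from fun_cong[OF this, of "\<omega> *\<^sub>R lam0 - \<omega> *\<^sub>R l"] show ?thesis by (simp add: inner_commute)
  qed
  have DeltaE: "DeltaB B J l t = transpose B *v (gf t + Hf t *v l) + (1/2) *\<^sub>R diag_vec (transpose B ** Hf t ** B)"
    if "t \<in> T" for l t
  proof -
    have "DeltaB B J l t $ i = (transpose B *v (gf t + Hf t *v l) + (1/2) *\<^sub>R diag_vec (transpose B ** Hf t ** B)) $ i" for i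
    proof -
      define b where "b = col B i"
      have "DeltaB B J l t $ i = J (l + b) t - J l t" by (simp add: DeltaB_def b_def)
      also have "\<dots> = gf t \<bullet> b + (1/2) * (l \<bullet> (Hf t *v b) + b \<bullet> (Hf t *v l) + b \<bullet> (Hf t *v b))"
        using Jform[OF that] by (simp add: inner_add_left inner_add_right matrix_vector_right_distrib algebra_simps)
      also have "\<dots> = b \<bullet> (gf t + Hf t *v l) + (1/2) * (b \<bullet> (Hf t *v b))"
        using inner_mat_sym[OF Hsym[of t], of l b] by (simp add: inner_add_right inner_commute algebra_simps)
      finally show ?thesis
        by (simp del: transpose_matrix_vector add: tB_entry diag_entry b_def)
    qed
    then show ?thesis by (simp add: vec_eq_iff del: transpose_matrix_vector)
  qed
  define Bt where "Bt = transpose B"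
  define Pm where "Pm = B ** Si ** Bt"
  have Pm_vec: "Pm *v x = B *v (Si *v (Bt *v x))" for x
    by (simp only: Pm_def matrix_vector_mul_assoc matrix_mul_assoc)
  have Pm_sym: "transpose Pm = Pm"
    by (simp add: Pm_def Bt_def matrix_transpose_mul Si_sym matrix_mul_assoc)
  have tB: "(Bt *v u) \<bullet> z = u \<bullet> (B *v z)" for u z unfolding Bt_def by (rule tT_inner)
  have main: "gd t = (mat \<omega> - Bt + Hf t ** B ** Si ** Bt) *v gf t
           - \<omega> *\<^sub>R (Hf t *v lam0)
           + (1/2) *\<^sub>R ((Hf t ** B ** Si - mat 1) *v diag_vec (Bt ** Hf t ** B))
      \<and> Hd t = transpose (mat \<omega> - B) ** Hf t + Hf t ** (mat \<omega> - B)
           + Hf t ** B ** Si ** Bt ** Hf t + Q" if tT: "t \<in> T" for t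
  proof -
    define H where "H = Hf t"
    define g where "g = gf t"
    define dv where "dv = diag_vec (Bt ** H ** B)"
    define v0 where "v0 = (1/2) *\<^sub>R dv"
    define X where "X = (1/2) *\<^sub>R Hd t - \<omega> *\<^sub>R H + Bt ** H - (1/2) *\<^sub>R Q - (1/2) *\<^sub>R (H ** Pm ** H)"
    define \<alpha> where "\<alpha> = gd t + \<omega> *\<^sub>R (H *v lam0) - \<omega> *\<^sub>R g + Bt *v g + v0 - H *v (Pm *v g) - H *v (B *v (Si *v v0))"
    define \<kappa> where "\<kappa> = Jt 0 t + \<omega> * (lam0 \<bullet> g) - (1/2) * (g \<bullet> (Pm *v g)) - g \<bullet> (B *v (Si *v v0)) - (1/2) * (v0 \<bullet> (Si *v v0))"
    have Hs: "transpose H = H" unfolding H_def by (rule Hsym)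
    have key: "\<kappa> + \<alpha> \<bullet> l + l \<bullet> (X *v l) = 0" for l
    proof -
      define u where "u = g + H *v l"
      define w where "w = Bt *v u"
      have Del: "DeltaB B J l t = w + v0"
        unfolding DeltaE[OF tT] w_def u_def v0_def dv_def Bt_def H_def g_def ..
      have h0: "0 = Jt l t + (\<omega> *\<^sub>R lam0 - \<omega> *\<^sub>R l) \<bullet> u + l \<bullet> (w + v0)
            - (1/2) * (l \<bullet> (Q *v l)) - (1/2) * ((w + v0) \<bullet> (Si *v (w + v0)))"
        using hP[OF tT, of l] gradE[OF tT, of l] unfolding P_def Del u_def H_def g_def by simp
      have a: "Jt l t = Jt 0 t + gd t \<bullet> l + (1/2) * (l \<bullet> (Hd t *v l))" by (rule JtE[OF tT])
      have s1: "lam0 \<bullet> (H *v l) = (H *v lam0) \<bullet> l"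
        using inner_mat_sym[OF Hs, of lam0 l] by (simp add: inner_commute)
      have b: "(\<omega> *\<^sub>R lam0 - \<omega> *\<^sub>R l) \<bullet> u = \<omega> * (lam0 \<bullet> g) + \<omega> * ((H *v lam0) \<bullet> l) - \<omega> * (g \<bullet> l) - \<omega> * (l \<bullet> (H *v l))"
        unfolding u_def by (simp add: inner_diff_left inner_add_right s1 inner_commute[of l g] algebra_simps)
      have c: "l \<bullet> (w + v0) = (Bt *v g) \<bullet> l + v0 \<bullet> l + l \<bullet> (Bt *v (H *v l))"
        unfolding w_def u_def by (simp add: matrix_vector_right_distrib inner_add_right inner_commute)
      have d1: "w \<bullet> (Si *v w) = u \<bullet> (Pm *v u)" unfolding w_def by (simp add: tB Pm_vec)
      have d2: "u \<bullet> (Pm *v u) = g \<bullet> (Pm *v g) + 2 * ((H *v (Pm *v g)) \<bullet> l) + l \<bullet> (H *v (Pm *v (H *v l)))"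
      proof -
        have x1: "g \<bullet> (Pm *v (H *v l)) = (H *v l) \<bullet> (Pm *v g)" by (rule inner_mat_sym[OF Pm_sym])
        have x2: "(H *v l) \<bullet> (Pm *v g) = (H *v (Pm *v g)) \<bullet> l" by (rule symswap[OF Hs])
        have x3: "(H *v l) \<bullet> (Pm *v (H *v l)) = l \<bullet> (H *v (Pm *v (H *v l)))"
          by (metis symswap[OF Hs] inner_commute)
        show ?thesis unfolding u_def
          by (simp add: matrix_vector_right_distrib inner_add_left inner_add_right x1 x2 x3)
      qed
      have d3: "w \<bullet> (Si *v v0) = g \<bullet> (B *v (Si *v v0)) + (H *v (B *v (Si *v v0))) \<bullet> l"
      proof -
        have "(H *v l) \<bullet> (B *v (Si *v v0)) = (H *v (B *v (Si *v v0))) \<bullet> l" by (rule symswap[OF Hs])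
        then show ?thesis unfolding w_def u_def by (simp add: tB inner_add_left)
      qed
      have d4: "v0 \<bullet> (Si *v w) = w \<bullet> (Si *v v0)" by (rule inner_mat_sym[OF Si_sym])
      have d: "(w + v0) \<bullet> (Si *v (w + v0)) = w \<bullet> (Si *v w) + 2 * (w \<bullet> (Si *v v0)) + v0 \<bullet> (Si *v v0)"
        by (simp add: matrix_vector_right_distrib inner_add_left inner_add_right d4)
      have e: "l \<bullet> (X *v l) = (1/2) * (l \<bullet> (Hd t *v l)) - \<omega> * (l \<bullet> (H *v l)) + l \<bullet> (Bt *v (H *v l))
          - (1/2) * (l \<bullet> (Q *v l)) - (1/2) * (l \<bullet> (H *v (Pm *v (H *v l))))"
        unfolding X_def
        by (simp add: matrix_vector_mult_add_rdistrib matrix_vector_mult_diff_rdistrib smat_vec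
            inner_add_right inner_diff_right matrix_vector_mul_assoc[symmetric])
      have f: "\<alpha> \<bullet> l = gd t \<bullet> l + \<omega> * ((H *v lam0) \<bullet> l) - \<omega> * (g \<bullet> l) + (Bt *v g) \<bullet> l + v0 \<bullet> l
          - (H *v (Pm *v g)) \<bullet> l - (H *v (B *v (Si *v v0))) \<bullet> l"
        unfolding \<alpha>_def by (simp add: inner_add_left inner_diff_left)
      show ?thesis using h0 a b c d d1 d2 d3 e f unfolding \<kappa>_def by linarith
    qed
    have az: "\<alpha> = 0" and xz: "\<forall>i j. X $ i $ j + X $ j $ i = 0"
      using qextract[of \<kappa> \<alpha> X] key by auto
    have g1: "(mat \<omega> - Bt + H ** B ** Si ** Bt) *v g = \<omega> *\<^sub>R g - Bt *v g + H *v (Pm *v g)"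
      by (simp add: matrix_vector_mult_add_rdistrib matrix_vector_mult_diff_rdistrib mat_vec Pm_vec
          matrix_vector_mul_assoc[symmetric])
    have g2: "(1/2) *\<^sub>R ((H ** B ** Si - mat 1) *v dv) = H *v (B *v (Si *v v0)) - v0"
      by (simp add: matrix_vector_mult_diff_rdistrib mat_vec v0_def mv_scale
          matrix_vector_mul_assoc[symmetric] scaleR_diff_right)
    have gE: "gd t = (mat \<omega> - Bt + H ** B ** Si ** Bt) *v g - \<omega> *\<^sub>R (H *v lam0)
           + (1/2) *\<^sub>R ((H ** B ** Si - mat 1) *v dv)"
    proof -
      have "gd t = gd t - \<alpha>" using az by simp
      also have "\<dots> = (mat \<omega> - Bt + H ** B ** Si ** Bt) *v g - \<omega> *\<^sub>R (H *v lam0)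
           + (1/2) *\<^sub>R ((H ** B ** Si - mat 1) *v dv)"
        unfolding g1 g2 \<alpha>_def by (simp add: algebra_simps)
      finally show ?thesis .
    qed
    have symE: "A $ j $ i = A $ i $ j" if "transpose A = A" for A :: "real^'n^'n" and i j
      using that by (metis transpose_entry)
    have HPH: "transpose (H ** Pm ** H) = H ** Pm ** H"
      by (simp add: matrix_transpose_mul Hs Pm_sym matrix_mul_assoc)
    have BH: "(Bt ** H) $ j $ i = (H ** B) $ i $ j" for i j
    proof -
      have "transpose (Bt ** H) = H ** B" by (simp add: matrix_transpose_mul Hs Bt_def)
      then show ?thesis by (metis transpose_entry)
    qed
    have HdE: "Hd t $ i $ j = 2 * \<omega> * H $ i $ j - (Bt ** H) $ i $ j - (H ** B) $ i $ j
        + (H ** Pm ** H) $ i $ j + Q $ i $ j" for i j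
    proof -
      have "X $ i $ j + X $ j $ i = 0" using xz by blast
      moreover have "Hd t $ j $ i = Hd t $ i $ j" by (rule symE[OF Hdsym])
      moreover have "H $ j $ i = H $ i $ j" by (rule symE[OF Hs])
      moreover have "Q $ j $ i = Q $ i $ j" by (rule symE[OF Q_sym])
      moreover have "(H ** Pm ** H) $ j $ i = (H ** Pm ** H) $ i $ j" by (rule symE[OF HPH])
      ultimately show ?thesis using BH[of i j] BH[of j i] unfolding X_def by simp
    qed
    have T1: "transpose (mat \<omega> - B) ** H + H ** (mat \<omega> - B) + H ** B ** Si ** Bt ** H + Q
        = \<omega> *\<^sub>R H - Bt ** H + (\<omega> *\<^sub>R H - H ** B) + H ** Pm ** H + Q"
      by (simp add: transpose_diff mm_diff_r mm_diff_l mat_mul_left mat_mul_right Pm_def matrix_mul_assoc Bt_def)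
    have HE: "Hd t = transpose (mat \<omega> - B) ** H + H ** (mat \<omega> - B) + H ** B ** Si ** Bt ** H + Q"
      unfolding T1 by (simp add: vec_eq_iff HdE)
    show ?thesis using gE HE unfolding H_def g_def dv_def by simp
  qed
  have e_F: "e i \<bullet> (F *v e j) = F $ i $ j" for i j unfolding e_def by (rule axis_mat_axis)
  have Fs: "F $ j $ i = F $ i $ j" for i j using F_sym by (metis transpose_entry)
  have HT: "Hf tf = - F"
  proof -
    have "Hf tf $ i $ j = - F $ i $ j" for i j
      using Fs[of i j] by (simp add: Hf_def terminal matrix_vector_right_distrib inner_add_left inner_add_right e_F) (simp add: field_simps)
    then show ?thesis by (simp add: vec_eq_iff)
  qed
  have gT: "gf tf = 0"
    using HT by (simp add: vec_eq_iff gf_def terminal e_F)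
  show ?thesis
  proof (intro exI conjI)
    show "Hf tf = - F" by (rule HT)
    show "gf tf = 0" by (rule gT)
    show "\<forall>t\<in>{t0..tf}. (Hf has_vector_derivative
          (transpose (mat \<omega> - B) ** Hf t + Hf t ** (mat \<omega> - B)
           + Hf t ** B ** Si ** transpose B ** Hf t + Q)) (at t within {t0..tf})"
      using dH main unfolding T_def Bt_def by auto
    show "\<forall>t\<in>{t0..tf}. (gf has_vector_derivative
          ((mat \<omega> - transpose B + Hf t ** B ** Si ** transpose B) *v gf t
           - \<omega> *\<^sub>R (Hf t *v lam0)
           + (1/2) *\<^sub>R ((Hf t ** B ** Si - mat 1)
                         *v diag_vec (transpose B ** Hf t ** B)))) (at t within {t0..tf})"
      using dg main unfolding T_def Bt_def by auto
    show "\<forall>l. \<forall>t\<in>{t0..tf}. J l t = ff t + gf t \<bullet> l + (1/2) * (l \<bullet> (Hf t *v l))"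
      using Jform unfolding T_def by auto
  qed
qed


theorem lemma5:
  fixes B Q S F :: "real^'n^'n"
    and \<omega> t0 tf :: real
    and lam0 :: "real^'n"
    and J :: "real^'n \<Rightarrow> real \<Rightarrow> real"
  assumes B_nonneg: "\<forall>i j. B $ i $ j \<ge> 0"
    and omega_nonneg: "\<omega> \<ge> 0"
    and lambda0_nonneg: "\<forall>i. lam0 $ i \<ge> 0"
    and Q_sym: "transpose Q = Q" and Q_nonneg: "\<forall>i j. Q $ i $ j \<ge> 0"
    and S_sym: "transpose S = S" and S_nonneg: "\<forall>i j. S $ i $ j \<ge> 0"
    and F_sym: "transpose F = F" and F_nonneg: "\<forall>i j. F $ i $ j \<ge> 0"
    and S_inv: "invertible S"
    and times: "t0 < tf"
    and J_poly: "poly_in_lambda J {t0..tf}"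
    and HJB: "\<forall>l. \<forall>t\<in>{t0..tf}. \<exists>Jt grad.
        ((\<lambda>s. J l s) has_real_derivative Jt) (at t within {t0..tf}) \<and>
        ((\<lambda>x. J x t) has_derivative (\<lambda>h. grad \<bullet> h)) (at l) \<and>
        0 = Jt + (\<omega> *\<^sub>R lam0 - \<omega> *\<^sub>R l) \<bullet> grad + l \<bullet> DeltaB B J l t
            - (1/2) * (l \<bullet> (Q *v l))
            - (1/2) * (DeltaB B J l t \<bullet> (matrix_inv S *v DeltaB B J l t))"
    and terminal: "\<forall>l. J l tf = - (1/2) * (l \<bullet> (F *v l))"
  shows "\<exists>(f :: real \<Rightarrow> real) (g :: real \<Rightarrow> real^'n) (H :: real \<Rightarrow> real^'n^'n).
      H tf = - F \<and> g tf = 0 \<and>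
      (\<forall>t\<in>{t0..tf}. (H has_vector_derivative
          (transpose (mat \<omega> - B) ** H t + H t ** (mat \<omega> - B)
           + H t ** B ** matrix_inv S ** transpose B ** H t + Q))
         (at t within {t0..tf})) \<and>
      (\<forall>t\<in>{t0..tf}. (g has_vector_derivative
          ((mat \<omega> - transpose B + H t ** B ** matrix_inv S ** transpose B) *v g t
           - \<omega> *\<^sub>R (H t *v lam0)
           + (1/2) *\<^sub>R ((H t ** B ** matrix_inv S - mat 1)
                         *v diag_vec (transpose B ** H t ** B))))
         (at t within {t0..tf})) \<and>
      (\<forall>l. \<forall>t\<in>{t0..tf}. J l t = f t + g t \<bullet> l + (1/2) * (l \<bullet> (H t *v l)))"
  proof -
  obtain d c where rep0: "\<forall>l. \<forall>t\<in>{t0..tf}. J l t =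
          (\<Sum>\<alpha>\<in>{\<alpha>::'n \<Rightarrow> nat. (\<Sum>i\<in>UNIV. \<alpha> i) \<le> d}.
              c \<alpha> t * (\<Prod>i\<in>UNIV. (l $ i) ^ (\<alpha> i)))"
    using J_poly unfolding poly_in_lambda_def by blast
  have rep: "\<forall>l. \<forall>t\<in>{t0..tf}. J l t = (\<Sum>\<alpha>\<in>Ad d. c \<alpha> t * mon \<alpha> l)"
    using rep0 unfolding Ad_def deg_def mon_def by simp
  have high: "\<forall>t\<in>{t0..tf}. \<forall>\<alpha>\<in>Ad d. 3 \<le> deg \<alpha> \<longrightarrow> c \<alpha> t = 0"
    by (rule stepA[OF times rep HJB terminal])
  have quad: "\<forall>t\<in>{t0..tf}. \<exists>a b (M::real^'n^'n). \<forall>l. J l t = a + b \<bullet> l + l \<bullet> (M *v l)"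
  proof
    fix t assume t: "t \<in> {t0..tf}"
    have q: "isquad (\<lambda>l. c \<alpha> t * mon \<alpha> l)" if a: "\<alpha> \<in> Ad d" for \<alpha>
    proof (cases "deg \<alpha> \<le> 2")
      case True
      then show ?thesis by (intro isquad_cmult quad_mon)
    next
      case False
      then have "c \<alpha> t = 0" using high t a by auto
      moreover have "isquad (\<lambda>l. 0 * mon (\<lambda>i. 0::nat) l)"
        by (intro isquad_cmult quad_mon) simp
      ultimately show ?thesis by simp
    qed
    have "isquad (\<lambda>l. \<Sum>\<alpha>\<in>Ad d. c \<alpha> t * mon \<alpha> l)"
      by (intro isquad_sum finite_Ad q)
    moreover have "(\<lambda>l. J l t) = (\<lambda>l. \<Sum>\<alpha>\<in>Ad d. c \<alpha> t * mon \<alpha> l)" using rep t by auto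
    ultimately have "isquad (\<lambda>l. J l t)" by simp
    then show "\<exists>a b (M::real^'n^'n). \<forall>l. J l t = a + b \<bullet> l + l \<bullet> (M *v l)"
      unfolding isquad_def by simp
  qed
  have Si_sym: "transpose (matrix_inv S) = matrix_inv S" by (rule matrix_inv_sym[OF S_sym S_inv])
  show ?thesis by (rule stepB[OF times Q_sym F_sym Si_sym quad HJB terminal])
qed

end
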